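(* Let $P=P_{(\boldsymbol y,\boldsymbol s)}$ be a $\mathfrak{gl}_{m|n}$ population of solutions of the BAE associated to $\boldsymbol s,\boldsymbol z,\boldsymbol\lambda$, originated at $\boldsymbol y$. Then the rational difference operator $\mathcal R^{\tilde{\boldsymbol s}}(\tilde{\boldsymbol y})$ does not depend on the choice of $(\tilde{\boldsymbol y},\tilde{\boldsymbol s})\in P$.
   Context: Fix $h\in\mathbb{C}^\times$, integers $m,n\ge0$. $\mathbb{K}=\mathbb{C}(x)$; for $f\in\mathbb{K}$, $i\in\mathbb{Z}$ write $f[i](x)=f(x-ih)$. $\mathbb{K}[\tau]$ is the ring of difference operators $\sum_j a_j\tau^j$ ($a_j\in\mathbb{K}$) with $\tau f=f[1]\tau$, and $\mathbb{K}(\tau)$ is its division ring of fractions (rational difference operators). For $g_1,g_2\in\mathbb{K}$, $\epsilon\in\{\pm1\}$ put $\mathrm{Wr}^{\epsilon}(g_1,g_2)=g_1g_2[-\epsilon]-g_2g_1[-\epsilon]$. Parity sequences: $S_{m|n}$ is the set of $\boldsymbol s\in\{\pm1\}^{m+n}$ with exactly $m$ entries equal to $1$; $\sigma_{\boldsymbol s}(i)=\#\{j\le i:s_j=1\}$ if $s_i=1$, $\sigma_{\boldsymbol s}(i)=m+\#\{j\le i:s_j=-1\}$ if $s_i=-1$; $\boldsymbol s^{[i]}$ is $\boldsymbol s$ with entries $i,i+1$ swapped. A polynomial $\mathfrak{gl}_{m|n}$ weight is $\lambda\in\mathbb{Z}_{\ge0}^{m+n}$ with $\lambda_1\ge\dots\ge\lambda_m$,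 $\lambda_{m+1}\ge\dots\ge\lambda_{m+n}$, and $\lambda_{m+k}=0$ for $k>\lambda_m$; $L_\lambda$ is the irreducible module of highest weight $\lambda$. For $\boldsymbol s\in S_{m|n}$, let $v\in L_\lambda$ be the (unique up to scalar) nonzero vector with $e_{\sigma_{\boldsymbol s}(a)\sigma_{\boldsymbol s}(b)}v=0$ for all $a<b$, and let $\lambda^{\boldsymbol s}_i$ be the eigenvalue of $e_{\sigma_{\boldsymbol s}(i)\sigma_{\boldsymbol s}(i)}$ on $v$. For $\boldsymbol\lambda=(\lambda^{(1)},\dots,\lambda^{(p)})$ polynomial weights put $\lambda_i^{(k,\boldsymbol s)}=(\lambda^{(k)})^{\boldsymbol s}_i$. $\boldsymbol z\in\mathbb{C}^p$ is $h$-generic ($z_i-z_j\notin h\mathbb{Z}$ for $i\neq j$). $T_i^{\boldsymbol s}(x)=\prod_{k=1}^p\prod_{j=1}^{\lambda_i^{(k,\boldsymbol s)}}(x-z_k+s_ijh)$. If $s_i\ne s_{i+1}$: $\varphi_i^{\boldsymbol s}=\prod_k(x-z_k+s_i\lambda_i^{(k,\boldsymbol s)}h)$, $\psi_i^{\boldsymbol s}=\prod_k(x-z_k+s_{i+1}\lambda_{i+1}^{(k,\boldsymbol s)}h)$, products over $k$ with $\lambda_i^{(k,\boldsymbol s)}+\lambda_{i+1}^{(k,\boldsymbol s)}\neq0$. BAE associated to $\boldsymbol s,\boldsymbol z,\boldsymbol\lambda,\boldsymbol l$ ($l_0=l_{m+n}=0$), in variables $t^{(i)}_j$, $1\le i\le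 m+n-1$, $1\le j\le l_i$: \[\prod_{k=1}^p\frac{t_j^{(i)}-z_k+s_i\lambda_i^{(k,\boldsymbol s)}h}{t_j^{(i)}-z_k+s_{i+1}\lambda_{i+1}^{(k,\boldsymbol s)}h}\prod_{r=1}^{l_{i-1}}\frac{t_j^{(i)}-t_r^{(i-1)}+s_ih}{t_j^{(i)}-t_r^{(i-1)}}\prod_{r\ne j}\frac{t_j^{(i)}-t_r^{(i)}-s_ih}{t_j^{(i)}-t_r^{(i)}+s_{i+1}h}\prod_{r=1}^{l_{i+1}}\frac{t_j^{(i)}-t_r^{(i+1)}}{t_j^{(i)}-t_r^{(i+1)}-s_{i+1}h}=1,\] after cancelling the $k$-th first factor when $s_i\lambda_i^{(k,\boldsymbol s)}=s_{i+1}\lambda_{i+1}^{(k,\boldsymbol s)}$ and the third product when $s_i=-s_{i+1}$, with remaining denominators nonzero; if $s_i\ne s_{i+1}$, a root of multiplicity $r$ of the (j-independent) equation for $t^{(i)}_j$ with other colors fixed may occur among the $t^{(i)}_j$ at most $r$ times. $\boldsymbol y=(y_1,\dots,y_{m+n-1})$, $y_i=\prod_j(x-t^{(i)}_j)$, represents $\boldsymbol t$; $y_0=y_{m+n}=1$; polynomials are taken up to nonzero scalars. $\boldsymbol y$ is generic w.r.t. $\boldsymbol s,\boldsymbol\lambda,\boldsymbol z$ if for each $i$: (1) if $s_i=s_{i+1}$, $y_i$ has simple roots and no common root with $y_i[1]$; (2) $y_i$ has no common root with $y_{i-1},y_{i-1}[-s_i],y_{i+1}[s_{i+1}]$; (3)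 roots of $y_i$ are not roots of $T_i^{\boldsymbol s}(T_{i+1}^{\boldsymbol s})^{-s_is_{i+1}}$. Reproduction and population: let $\boldsymbol y$ be generic w.r.t. $\boldsymbol s,\boldsymbol\lambda,\boldsymbol z$ and represent a BAE solution. If $s_i=s_{i+1}$ (bosonic reproduction in direction $i$), $(\boldsymbol y,\boldsymbol s)$ may be replaced by $(\boldsymbol y^{[i]},\boldsymbol s)$ for any nonzero polynomial $\tilde y_i$ with $\mathrm{Wr}^{s_i}(y_i,\tilde y_i)=T_i^{\boldsymbol s}(T_{i+1}^{\boldsymbol s})^{-1}y_{i-1}[-s_i]y_{i+1}$, where $\boldsymbol y^{[i]}$ is $\boldsymbol y$ with $y_i$ replaced by $\tilde y_i$. If $s_i\neq s_{i+1}$ and $\varphi_i^{\boldsymbol s}y_{i-1}[-s_i]y_{i+1}\ne\psi_i^{\boldsymbol s}y_{i-1}y_{i+1}[-s_i]$ (fermionic reproduction), $(\boldsymbol y,\boldsymbol s)$ is replaced by $(\boldsymbol y^{[i]},\boldsymbol s^{[i]})$ where $\tilde y_i$ is the polynomial with $y_i\tilde y_i[-s_i]=\varphi_i^{\boldsymbol s}y_{i-1}[-s_i]y_{i+1}-\psi_i^{\boldsymbol s}y_{i-1}y_{i+1}[-s_i]$. Reproductions are applied again to resulting pairs that are generic (w.r.t. their parity sequence). The population $P_{(\boldsymbol y,\boldsymbol s)}$ is the closure in $(\mathbb{P}(\mathbb{C}[x]))^{m+n-1}\times S_{m|n}$ of the set of all pairs obtained from $(\boldsymbol y,\boldsymbol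 s)$ by finitely many reproductions. For a pair $(\boldsymbol y,\boldsymbol s)$, \[\mathcal R^{\boldsymbol s}(\boldsymbol y)=\prod_{i=1}^{m+n}\Big(1-\frac{T_i^{\boldsymbol s}\,y_{i-1}[-s_i]\,y_i[s_i]}{T_i^{\boldsymbol s}[s_i]\,y_{i-1}\,y_i}\,\tau\Big)^{s_i}\in\mathbb{K}(\tau),\] the product ordered with $i$ increasing from left to right. *)

theory Defs
  imports "HOL-Computational_Algebra.Computational_Algebra"
begin

text \<open>
  Indices: parity sequences s are functions nat => int, entries s 1, ..., s (m+n), each in {1,-1},
  and s i = 0 outside {1..m+n}.  Weights mu :: nat => int with entries mu 1, ..., mu (m+n).
  The p points z and weights lam are indexed by k < p.
  Tuples y :: nat => complex poly with y 1, ..., y (m+n-1) nonzero, and y i = 1 for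
  i = 0 and i >= m+n (so y_0 = y_{m+n} = 1).
  The field K = C(x) is the type  complex poly fract.
\<close>

text \<open>On K, f[c] is the unique g with g = a[c]/b[c] for every representation f = a/b
  (well defined since p \<mapsto> p[c] is a ring automorphism of C[x]).\<close>

definition pshift :: "complex \<Rightarrow> int \<Rightarrow> complex poly \<Rightarrow> complex poly" where
  "pshift h c f = pcompose f [:- (of_int c * h), 1:]"

definition fshift :: "complex \<Rightarrow> int \<Rightarrow> complex poly fract \<Rightarrow> complex poly fract" where
  "fshift h c f = (SOME g. \<forall>a b. b \<noteq> 0 \<longrightarrow> f = Fract a b \<longrightarrow> g = Fract (pshift h c a) (pshift h c b))"

definition parseqs :: "nat \<Rightarrow> nat \<Rightarrow> (nat \<Rightarrow> int) set" where
  "parseqs m n = {s. (\<forall>i. (1 \<le> i \<and> i \<le> m + n \<longrightarrow> s i \<in> {1, -1}) \<and>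
                           (\<not> (1 \<le> i \<and> i \<le> m + n) \<longrightarrow> s i = 0))
                     \<and> card {i \<in> {1..m+n}. s i = 1} = m}"

definition std_parseq :: "nat \<Rightarrow> nat \<Rightarrow> nat \<Rightarrow> int" where
  "std_parseq m n i = (if 1 \<le> i \<and> i \<le> m then 1 else if m < i \<and> i \<le> m + n then -1 else 0)"

definition swap_at :: "nat \<Rightarrow> (nat \<Rightarrow> 'a) \<Rightarrow> nat \<Rightarrow> 'a" where
  "swap_at i s = s(i := s (i+1), i+1 := s i)"

definition polyweight :: "nat \<Rightarrow> nat \<Rightarrow> (nat \<Rightarrow> int) \<Rightarrow> bool" where
  "polyweight m n mu \<longleftrightarrow>
     (\<forall>i. 1 \<le> i \<and> i \<le> m + n \<longrightarrow> mu i \<ge> 0) \<and>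
     (\<forall>i. 1 \<le> i \<and> i < m \<longrightarrow> mu i \<ge> mu (i+1)) \<and>
     (\<forall>i. m + 1 \<le> i \<and> i < m + n \<longrightarrow> mu i \<ge> mu (i+1)) \<and>
     (m > 0 \<longrightarrow> (\<forall>k. 1 \<le> k \<and> k \<le> n \<and> int k > mu m \<longrightarrow> mu (m + k) = 0))"

text \<open>Odd reflection in direction i (s_i \<noteq> s_(i+1)): for the odd simple root
  alpha = e_sigma(i) - e_sigma(i+1), (lambda, alpha) = s_i (lambda_i + lambda_(i+1));
  the new highest weight is lambda - alpha if this is nonzero and lambda otherwise,
  written in the coordinates of the swapped parity sequence.\<close>
definition oddrefl :: "nat \<Rightarrow> (nat \<Rightarrow> int) \<Rightarrow> nat \<Rightarrow> int" where
  "oddrefl i mu = (if mu i + mu (i+1) \<noteq> 0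
                   then mu(i := mu (i+1) + 1, i+1 := mu i - 1)
                   else mu(i := mu (i+1), i+1 := mu i))"

inductive hwrel :: "nat \<Rightarrow> nat \<Rightarrow> (nat \<Rightarrow> int) \<Rightarrow> (nat \<Rightarrow> int) \<Rightarrow> (nat \<Rightarrow> int) \<Rightarrow> bool"
  for m n mu where
  std: "hwrel m n mu (std_parseq m n) mu"
| refl_odd: "hwrel m n mu s nu \<Longrightarrow> 1 \<le> i \<Longrightarrow> i < m + n \<Longrightarrow> s i \<noteq> s (i+1) \<Longrightarrow>
             hwrel m n mu (swap_at i s) (oddrefl i nu)"

definition lamS :: "nat \<Rightarrow> nat \<Rightarrow> (nat \<Rightarrow> int) \<Rightarrow> (nat \<Rightarrow> int) \<Rightarrow> nat \<Rightarrow> int" where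
  "lamS m n mu s = (THE nu. hwrel m n mu s nu)"

definition linf :: "complex \<Rightarrow> complex poly" where
  "linf c = [:c, 1:]"

definition Tpol :: "complex \<Rightarrow> nat \<Rightarrow> nat \<Rightarrow> nat \<Rightarrow> (nat \<Rightarrow> complex) \<Rightarrow> (nat \<Rightarrow> nat \<Rightarrow> int)
                    \<Rightarrow> (nat \<Rightarrow> int) \<Rightarrow> nat \<Rightarrow> complex poly" where
  "Tpol h m n p z lam s i =
     (\<Prod>k<p. \<Prod>j\<in>{1..lamS m n (lam k) s i}. linf (- z k + of_int (s i) * of_int j * h))"

definition phipol :: "complex \<Rightarrow> nat \<Rightarrow> nat \<Rightarrow> nat \<Rightarrow> (nat \<Rightarrow> complex) \<Rightarrow> (nat \<Rightarrow> nat \<Rightarrow> int)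
                    \<Rightarrow> (nat \<Rightarrow> int) \<Rightarrow> nat \<Rightarrow> complex poly" where
  "phipol h m n p z lam s i =
     (\<Prod>k\<in>{k. k < p \<and> lamS m n (lam k) s i + lamS m n (lam k) s (i+1) \<noteq> 0}.
        linf (- z k + of_int (s i) * of_int (lamS m n (lam k) s i) * h))"

definition psipol :: "complex \<Rightarrow> nat \<Rightarrow> nat \<Rightarrow> nat \<Rightarrow> (nat \<Rightarrow> complex) \<Rightarrow> (nat \<Rightarrow> nat \<Rightarrow> int)
                    \<Rightarrow> (nat \<Rightarrow> int) \<Rightarrow> nat \<Rightarrow> complex poly" where
  "psipol h m n p z lam s i =
     (\<Prod>k\<in>{k. k < p \<and> lamS m n (lam k) s i + lamS m n (lam k) s (i+1) \<noteq> 0}.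
        linf (- z k + of_int (s (i+1)) * of_int (lamS m n (lam k) s (i+1)) * h))"

definition hgeneric :: "complex \<Rightarrow> nat \<Rightarrow> (nat \<Rightarrow> complex) \<Rightarrow> bool" where
  "hgeneric h p z \<longleftrightarrow> (\<forall>i<p. \<forall>j<p. i \<noteq> j \<longrightarrow> (\<forall>c::int. z i - z j \<noteq> of_int c * h))"

text \<open>tt i is the multiset {t^(i)_1, ..., t^(i)_(l_i)}; tt 0 = tt (m+n) = {#}.
  For a root t = t^(i)_j, the third product runs over tt i minus one copy of t (r \<noteq> j).\<close>

definition bae_cancel :: "nat \<Rightarrow> nat \<Rightarrow> (nat \<Rightarrow> nat \<Rightarrow> int) \<Rightarrow> (nat \<Rightarrow> int) \<Rightarrow> nat \<Rightarrow> nat \<Rightarrow> bool" where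
  "bae_cancel m n lam s i k \<longleftrightarrow>
     s i * lamS m n (lam k) s i = s (i+1) * lamS m n (lam k) s (i+1)"

definition bae_eq :: "complex \<Rightarrow> nat \<Rightarrow> nat \<Rightarrow> nat \<Rightarrow> (nat \<Rightarrow> complex) \<Rightarrow> (nat \<Rightarrow> nat \<Rightarrow> int)
     \<Rightarrow> (nat \<Rightarrow> int) \<Rightarrow> (nat \<Rightarrow> complex multiset) \<Rightarrow> nat \<Rightarrow> complex \<Rightarrow> bool" where
  "bae_eq h m n p z lam s tt i t \<longleftrightarrow>
     (let si = of_int (s i); si1 = of_int (s (i+1));
          K = {k. k < p \<and> \<not> bae_cancel m n lam s i k};
          num1 = (\<lambda>k. t - z k + si * of_int (lamS m n (lam k) s i) * h);
          den1 = (\<lambda>k. t - z k + si1 * of_int (lamS m n (lam k) s (i+1)) * h);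
          bos = (s i = s (i+1))
      in (\<forall>k\<in>K. den1 k \<noteq> 0)
       \<and> (\<forall>r\<in>#tt (i-1). t - r \<noteq> 0)
       \<and> (bos \<longrightarrow> (\<forall>r\<in># tt i - {#t#}. t - r + si1 * h \<noteq> 0))
       \<and> (\<forall>r\<in>#tt (i+1). t - r - si1 * h \<noteq> 0)
       \<and> (\<Prod>k\<in>K. num1 k / den1 k)
         * (\<Prod>r\<in>#tt (i-1). (t - r + si * h) / (t - r))
         * (if bos then (\<Prod>r\<in># tt i - {#t#}. (t - r - si * h) / (t - r + si1 * h)) else 1)
         * (\<Prod>r\<in>#tt (i+1). (t - r) / (t - r - si1 * h)) = 1)"

text \<open>For s_i \<noteq> s_(i+1) the (j-independent) equation, cleared of denominators, reads
  bae_poly(t) = 0; a root of multiplicity r may occur at most r times among the t^(i)_j.\<close>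
definition bae_poly :: "complex \<Rightarrow> nat \<Rightarrow> nat \<Rightarrow> nat \<Rightarrow> (nat \<Rightarrow> complex) \<Rightarrow> (nat \<Rightarrow> nat \<Rightarrow> int)
     \<Rightarrow> (nat \<Rightarrow> int) \<Rightarrow> (nat \<Rightarrow> complex multiset) \<Rightarrow> nat \<Rightarrow> complex poly" where
  "bae_poly h m n p z lam s tt i =
     (let si = of_int (s i); si1 = of_int (s (i+1));
          K = {k. k < p \<and> \<not> bae_cancel m n lam s i k}
      in (\<Prod>k\<in>K. linf (- z k + si * of_int (lamS m n (lam k) s i) * h))
           * (\<Prod>r\<in>#tt (i-1). linf (si * h - r)) * (\<Prod>r\<in>#tt (i+1). linf (- r))
       - (\<Prod>k\<in>K. linf (- z k + si1 * of_int (lamS m n (lam k) s (i+1)) * h))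
           * (\<Prod>r\<in>#tt (i-1). linf (- r)) * (\<Prod>r\<in>#tt (i+1). linf (- r - si1 * h)))"

definition bae_solution :: "complex \<Rightarrow> nat \<Rightarrow> nat \<Rightarrow> nat \<Rightarrow> (nat \<Rightarrow> complex) \<Rightarrow> (nat \<Rightarrow> nat \<Rightarrow> int)
     \<Rightarrow> (nat \<Rightarrow> int) \<Rightarrow> (nat \<Rightarrow> complex multiset) \<Rightarrow> bool" where
  "bae_solution h m n p z lam s tt \<longleftrightarrow>
     tt 0 = {#} \<and> tt (m+n) = {#} \<and>
     (\<forall>i. 1 \<le> i \<and> i < m + n \<longrightarrow>
        (\<forall>t\<in>#tt i. bae_eq h m n p z lam s tt i t) \<and>
        (s i \<noteq> s (i+1) \<longrightarrow> bae_poly h m n p z lam s tt i \<noteq> 0 \<longrightarrow>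
           (\<forall>t. count (tt i) t \<le> order t (bae_poly h m n p z lam s tt i))))"

definition represents_bae :: "complex \<Rightarrow> nat \<Rightarrow> nat \<Rightarrow> nat \<Rightarrow> (nat \<Rightarrow> complex) \<Rightarrow> (nat \<Rightarrow> nat \<Rightarrow> int)
     \<Rightarrow> (nat \<Rightarrow> int) \<Rightarrow> (nat \<Rightarrow> complex poly) \<Rightarrow> bool" where
  "represents_bae h m n p z lam s y \<longleftrightarrow>
     (\<exists>tt. bae_solution h m n p z lam s tt \<and>
        (\<forall>i. 1 \<le> i \<and> i < m + n \<longrightarrow> (\<exists>c. c \<noteq> 0 \<and> y i = smult c (\<Prod>t\<in>#tt i. linf (- t)))))"

definition valid_tuple :: "nat \<Rightarrow> nat \<Rightarrow> (nat \<Rightarrow> complex poly) \<Rightarrow> bool" where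
  "valid_tuple m n y \<longleftrightarrow> (\<forall>i. (i = 0 \<or> m + n \<le> i) \<longrightarrow> y i = 1) \<and> (\<forall>i. 1 \<le> i \<and> i < m + n \<longrightarrow> y i \<noteq> 0)"

text \<open>Roots of the rational function T_i (T_(i+1))^(-s_i s_(i+1)).\<close>
definition Troot :: "complex \<Rightarrow> nat \<Rightarrow> nat \<Rightarrow> nat \<Rightarrow> (nat \<Rightarrow> complex) \<Rightarrow> (nat \<Rightarrow> nat \<Rightarrow> int)
     \<Rightarrow> (nat \<Rightarrow> int) \<Rightarrow> nat \<Rightarrow> complex \<Rightarrow> bool" where
  "Troot h m n p z lam s i t \<longleftrightarrow>
     (if s i * s (i+1) = 1
      then order t (Tpol h m n p z lam s i) > order t (Tpol h m n p z lam s (i+1))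
      else poly (Tpol h m n p z lam s i) t = 0 \<or> poly (Tpol h m n p z lam s (i+1)) t = 0)"

definition generic :: "complex \<Rightarrow> nat \<Rightarrow> nat \<Rightarrow> nat \<Rightarrow> (nat \<Rightarrow> complex) \<Rightarrow> (nat \<Rightarrow> nat \<Rightarrow> int)
     \<Rightarrow> (nat \<Rightarrow> int) \<Rightarrow> (nat \<Rightarrow> complex poly) \<Rightarrow> bool" where
  "generic h m n p z lam s y \<longleftrightarrow>
     (\<forall>i. 1 \<le> i \<and> i < m + n \<longrightarrow>
        (s i = s (i+1) \<longrightarrow> rsquarefree (y i) \<and>
            (\<forall>t. poly (y i) t = 0 \<longrightarrow> poly (pshift h 1 (y i)) t \<noteq> 0)) \<and>
        (\<forall>t. poly (y i) t = 0 \<longrightarrow>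
            poly (y (i-1)) t \<noteq> 0 \<and> poly (pshift h (- s i) (y (i-1))) t \<noteq> 0 \<and>
            poly (pshift h (s (i+1)) (y (i+1))) t \<noteq> 0) \<and>
        (\<forall>t. poly (y i) t = 0 \<longrightarrow> \<not> Troot h m n p z lam s i t))"

definition Wr :: "complex \<Rightarrow> int \<Rightarrow> complex poly \<Rightarrow> complex poly \<Rightarrow> complex poly" where
  "Wr h e g1 g2 = g1 * pshift h (- e) g2 - g2 * pshift h (- e) g1"

text \<open>One reproduction step (polynomials up to nonzero scalars).  The bosonic equation
  Wr = T_i T_(i+1)^(-1) y_(i-1)[-s_i] y_(i+1) is multiplied by the nonzero T_(i+1).\<close>
definition repro_step :: "complex \<Rightarrow> nat \<Rightarrow> nat \<Rightarrow> nat \<Rightarrow> (nat \<Rightarrow> complex) \<Rightarrow> (nat \<Rightarrow> nat \<Rightarrow> int)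
     \<Rightarrow> ((nat \<Rightarrow> complex poly) \<times> (nat \<Rightarrow> int)) \<Rightarrow> ((nat \<Rightarrow> complex poly) \<times> (nat \<Rightarrow> int)) \<Rightarrow> bool" where
  "repro_step h m n p z lam a b \<longleftrightarrow>
     (case a of (y, s) \<Rightarrow>
       generic h m n p z lam s y \<and>
       (\<exists>i yt. 1 \<le> i \<and> i < m + n \<and> yt \<noteq> 0 \<and>
         ((s i = s (i+1) \<and> b = (y(i := yt), s) \<and>
           (\<exists>c. c \<noteq> 0 \<and> Wr h (s i) (y i) yt * Tpol h m n p z lam s (i+1) =
              smult c (Tpol h m n p z lam s i * pshift h (- s i) (y (i-1)) * y (i+1))))
        \<or>
          (s i \<noteq> s (i+1) \<and> b = (y(i := yt), swap_at i s) \<and>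
           phipol h m n p z lam s i * pshift h (- s i) (y (i-1)) * y (i+1)
             \<noteq> psipol h m n p z lam s i * y (i-1) * pshift h (- s i) (y (i+1)) \<and>
           (\<exists>c. c \<noteq> 0 \<and> y i * pshift h (- s i) yt =
              smult c (phipol h m n p z lam s i * pshift h (- s i) (y (i-1)) * y (i+1)
                 - psipol h m n p z lam s i * y (i-1) * pshift h (- s i) (y (i+1))))))))"

text \<open>Closedness in (P(C[x]))^(m+n-1) x S_(m|n): the topology is the inductive limit of the
  (compact, metrizable) spaces P(C[x]_{\<le> d})^(m+n-1) x S_(m|n); a set is closed iff each
  piece is sequentially closed; projective convergence = convergence of suitable representatives.\<close>
definition pop_closed :: "nat \<Rightarrow> nat \<Rightarrow> ((nat \<Rightarrow> complex poly) \<times> (nat \<Rightarrow> int)) set \<Rightarrow> bool" where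
  "pop_closed m n C \<longleftrightarrow>
     (\<forall>d s (u :: nat \<Rightarrow> nat \<Rightarrow> complex poly) v.
        (\<forall>k. (u k, s) \<in> C) \<and> (\<forall>k i. 1 \<le> i \<and> i < m + n \<longrightarrow> degree (u k i) \<le> d) \<and>
        valid_tuple m n v \<and>
        (\<forall>i j. 1 \<le> i \<and> i < m + n \<longrightarrow> (\<lambda>k. coeff (u k i) j) \<longlonglongrightarrow> coeff (v i) j)
        \<longrightarrow> (v, s) \<in> C)"

definition population :: "complex \<Rightarrow> nat \<Rightarrow> nat \<Rightarrow> nat \<Rightarrow> (nat \<Rightarrow> complex) \<Rightarrow> (nat \<Rightarrow> nat \<Rightarrow> int)
     \<Rightarrow> (nat \<Rightarrow> complex poly) \<Rightarrow> (nat \<Rightarrow> int) \<Rightarrow> ((nat \<Rightarrow> complex poly) \<times> (nat \<Rightarrow> int)) set" where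
  "population h m n p z lam y s =
     \<Inter>{C. {b. (repro_step h m n p z lam)\<^sup>*\<^sup>* (y, s) b} \<subseteq> C \<and> pop_closed m n C}"

text \<open>K(tau) is embedded in the division ring K((tau)) of skew Laurent series
  (tau f = f[1] tau); all elements needed here lie in the skew power series ring K[[tau]],
  represented by coefficient sequences a with  sum_j a_j tau^j.\<close>
type_synonym dop = "nat \<Rightarrow> complex poly fract"

definition dop_one :: dop where "dop_one = (\<lambda>k. if k = 0 then 1 else 0)"

definition dop_mult :: "complex \<Rightarrow> dop \<Rightarrow> dop \<Rightarrow> dop" where
  "dop_mult h A B = (\<lambda>k. \<Sum>j\<le>k. A j * fshift h (int j) (B (k - j)))"

definition dop_lin :: "complex poly fract \<Rightarrow> dop" where
  "dop_lin a = (\<lambda>k. if k = 0 then 1 else if k = 1 then - a else 0)"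

text \<open>(1 - a tau)^(-1) = sum_k a a[1] ... a[k-1] tau^k\<close>
definition dop_lin_inv :: "complex \<Rightarrow> complex poly fract \<Rightarrow> dop" where
  "dop_lin_inv h a = (\<lambda>k. \<Prod>i<k. fshift h (int i) a)"

definition dop_factor :: "complex \<Rightarrow> int \<Rightarrow> complex poly fract \<Rightarrow> dop" where
  "dop_factor h e a = (if e = 1 then dop_lin a else dop_lin_inv h a)"

definition Rcoef :: "complex \<Rightarrow> nat \<Rightarrow> nat \<Rightarrow> nat \<Rightarrow> (nat \<Rightarrow> complex) \<Rightarrow> (nat \<Rightarrow> nat \<Rightarrow> int)
     \<Rightarrow> (nat \<Rightarrow> int) \<Rightarrow> (nat \<Rightarrow> complex poly) \<Rightarrow> nat \<Rightarrow> complex poly fract" where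
  "Rcoef h m n p z lam s y i =
     Fract (Tpol h m n p z lam s i * pshift h (- s i) (y (i-1)) * pshift h (s i) (y i))
           (pshift h (s i) (Tpol h m n p z lam s i) * y (i-1) * y i)"

text \<open>R^s(y) = prod_{i=1}^{m+n} (1 - Rcoef_i tau)^{s_i}, i increasing from left to right\<close>
definition Rop :: "complex \<Rightarrow> nat \<Rightarrow> nat \<Rightarrow> nat \<Rightarrow> (nat \<Rightarrow> complex) \<Rightarrow> (nat \<Rightarrow> nat \<Rightarrow> int)
     \<Rightarrow> (nat \<Rightarrow> int) \<Rightarrow> (nat \<Rightarrow> complex poly) \<Rightarrow> dop" where
  "Rop h m n p z lam s y =
     foldl (\<lambda>acc i. dop_mult h acc (dop_factor h (s i) (Rcoef h m n p z lam s y i)))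
           dop_one [1..<m+n+1]"

end

theory Submission
  imports Defs
begin

lemma pshift_mult: "pshift h c (p * q) = pshift h c p * pshift h c q"
  by (simp add: pshift_def pcompose_mult)
lemma pshift_add: "pshift h c (p + q) = pshift h c p + pshift h c q"
  by (simp add: pshift_def pcompose_add)
lemma pshift_diff: "pshift h c (p - q) = pshift h c p - pshift h c q"
  by (simp add: pshift_def pcompose_diff)
lemma pshift_uminus: "pshift h c (- p) = - pshift h c p"
  by (simp add: pshift_def pcompose_uminus)
lemma pshift_smult: "pshift h c (smult a p) = smult a (pshift h c p)"
  by (simp add: pshift_def pcompose_smult)
lemma pshift_1[simp]: "pshift h c 1 = 1"
  by (simp add: pshift_def pcompose_1)
lemma pshift_0[simp]: "pshift h c 0 = 0"
  by (simp add: pshift_def)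
lemma pshift_const[simp]: "pshift h c [:a:] = [:a:]"
  by (simp add: pshift_def)
lemma pshift_prod: "pshift h c (prod f A) = prod (\<lambda>i. pshift h c (f i)) A"
  by (simp add: pshift_def pcompose_prod)
lemma pshift_sum: "pshift h c (sum f A) = sum (\<lambda>i. pshift h c (f i)) A"
  by (simp add: pshift_def pcompose_sum)
lemma pshift_pshift: "pshift h c (pshift h d f) = pshift h (c + d) f"
proof -
  have "pcompose [:- (of_int d * h), 1:] [:- (of_int c * h), 1:] = [:- (of_int (c+d) * h), 1:]"
    by (simp add: pcompose_pCons algebra_simps)
  then show ?thesis unfolding pshift_def by (metis pcompose_assoc)
qed
lemma pshift_zero_shift[simp]: "pshift h 0 f = f"
  by (simp add: pshift_def)
lemma pshift_eq_0_iff[simp]: "pshift h c f = 0 \<longleftrightarrow> f = 0"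
  unfolding pshift_def by (rule pcompose_eq_0_iff) simp
lemma pshift_linf: "pshift h c (linf a) = linf (a - of_int c * h)"
  by (simp add: pshift_def linf_def pcompose_pCons algebra_simps)

lemma fshift_Fract: assumes "b \<noteq> 0"
  shows "fshift h c (Fract a b) = Fract (pshift h c a) (pshift h c b)"
proof -
  let ?P = "\<lambda>g. \<forall>a' b'. b' \<noteq> 0 \<longrightarrow> Fract a b = Fract a' b' \<longrightarrow> g = Fract (pshift h c a') (pshift h c b')"
  have P: "?P (Fract (pshift h c a) (pshift h c b))"
  proof (intro allI impI)
    fix a' b' :: "complex poly" assume b': "b' \<noteq> 0" and e: "Fract a b = Fract a' b'"
    then have "a * b' = a' * b" using assms by (simp add: eq_fract)
    then have "pshift h c a * pshift h c b' = pshift h c a' * pshift h c b"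
      by (metis pshift_mult)
    then show "Fract (pshift h c a) (pshift h c b) = Fract (pshift h c a') (pshift h c b')"
      using assms b' by (simp add: eq_fract)
  qed
  have "?P (fshift h c (Fract a b))" unfolding fshift_def by (rule someI, rule P)
  then show ?thesis using assms by blast
qed

lemma fshift_to_fract[simp]: "fshift h c (to_fract a) = to_fract (pshift h c a)"
  by (simp add: to_fract_def fshift_Fract)

lemma fshift_mult[simp]: "fshift h c (x * y) = fshift h c x * fshift h c y"
  by (cases x, cases y) (simp add: fshift_Fract pshift_mult)
lemma fshift_add[simp]: "fshift h c (x + y) = fshift h c x + fshift h c y"
  by (cases x, cases y) (simp add: fshift_Fract pshift_mult pshift_add)
lemma fshift_uminus[simp]: "fshift h c (- x) = - fshift h c x"
  by (cases x) (simp add: fshift_Fract pshift_uminus)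
lemma fshift_diff[simp]: "fshift h c (x - y) = fshift h c x - fshift h c y"
  by (metis diff_conv_add_uminus fshift_add fshift_uminus)
lemma fshift_1[simp]: "fshift h c 1 = 1"
  by (metis One_fract_def fshift_Fract one_neq_zero pshift_1)
lemma fshift_0[simp]: "fshift h c 0 = 0"
  by (metis Zero_fract_def fshift_Fract one_neq_zero pshift_1 pshift_0)
lemma fshift_inverse[simp]: "fshift h c (inverse x) = inverse (fshift h c x)"
proof (cases x)
  case (Fract a b)
  then show ?thesis by (cases "a = 0") (auto simp add: fshift_Fract eq_fract)
qed
lemma fshift_divide[simp]: "fshift h c (x / y) = fshift h c x / fshift h c y"
  by (simp add: divide_inverse)
lemma fshift_fshift[simp]: "fshift h c (fshift h d x) = fshift h (c + d) x"
  by (cases x) (simp add: fshift_Fract pshift_pshift)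
lemma fshift_zero_shift[simp]: "fshift h 0 x = x"
  by (cases x) (simp add: fshift_Fract)
lemma fshift_sum: "fshift h c (sum f A) = sum (\<lambda>i. fshift h c (f i)) A"
  by (induction A rule: infinite_finite_induct) auto
lemma fshift_prod: "fshift h c (prod f A) = prod (\<lambda>i. fshift h c (f i)) A"
  by (induction A rule: infinite_finite_induct) auto

lemma sum_atMost_only0: "(\<And>j. j \<le> (k::nat) \<Longrightarrow> j \<noteq> 0 \<Longrightarrow> f j = 0) \<Longrightarrow> (\<Sum>j\<le>k. f j) = f 0"
proof -
  assume a: "\<And>j. j \<le> k \<Longrightarrow> j \<noteq> 0 \<Longrightarrow> f j = 0"
  have "(\<Sum>j\<le>k. f j) = f 0 + (\<Sum>j\<in>{..k} - {0}. f j)" using sum.remove[of "{..k}" 0 f] by simp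
  also have "(\<Sum>j\<in>{..k} - {0}. f j) = 0" using a by (intro sum.neutral) auto
  finally show ?thesis by simp
qed

lemma sum_atMost_onlyk: "(\<And>j. j \<le> (k::nat) \<Longrightarrow> j \<noteq> k \<Longrightarrow> f j = 0) \<Longrightarrow> (\<Sum>j\<le>k. f j) = f k"
proof -
  assume a: "\<And>j. j \<le> k \<Longrightarrow> j \<noteq> k \<Longrightarrow> f j = 0"
  have "(\<Sum>j\<le>k. f j) = f k + (\<Sum>j\<in>{..k} - {k}. f j)" using sum.remove[of "{..k}" k f] by simp
  also have "(\<Sum>j\<in>{..k} - {k}. f j) = 0" using a by (intro sum.neutral) auto
  finally show ?thesis by simp
qed

lemma dop_one_left[simp]: "dop_mult h dop_one A = A"
proof
  fix k show "dop_mult h dop_one A k = A k"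
    unfolding dop_mult_def by (subst sum_atMost_only0) (auto simp: dop_one_def)
qed

lemma dop_one_right[simp]: "dop_mult h A dop_one = A"
proof
  fix k show "dop_mult h A dop_one k = A k"
    unfolding dop_mult_def by (subst sum_atMost_onlyk) (auto simp: dop_one_def)
qed

lemma assoc_lemma:
  fixes f :: "nat \<Rightarrow> nat \<Rightarrow> nat \<Rightarrow> 'a::comm_monoid_add"
  shows "(\<Sum>j\<le>k. \<Sum>i\<le>j. f i (j - i) (n - j)) = (\<Sum>j\<le>k. \<Sum>i\<le>k - j. f j i (n - j - i))"
  using fps_mult_assoc_lemma[where k=k and n=n and f=f] by (simp add: atLeast0AtMost)

lemma dop_assoc: "dop_mult h (dop_mult h A B) C = dop_mult h A (dop_mult h B C)"
proof
  fix k
  define f where "f = (\<lambda>i r t. A i * fshift h (int i) (B r) * fshift h (int (i + r)) (C t))"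
  have "dop_mult h (dop_mult h A B) C k = (\<Sum>j\<le>k. \<Sum>i\<le>j. f i (j - i) (k - j))"
    unfolding dop_mult_def sum_distrib_right f_def
    by (intro sum.cong refl) simp
  also have "\<dots> = (\<Sum>j\<le>k. \<Sum>i\<le>k - j. f j i (k - j - i))" by (rule assoc_lemma)
  also have "\<dots> = dop_mult h A (dop_mult h B C) k"
    unfolding dop_mult_def sum_distrib_left f_def fshift_sum
    by (intro sum.cong refl) (simp add: mult.assoc add.commute)
  finally show "dop_mult h (dop_mult h A B) C k = dop_mult h A (dop_mult h B C) k" .
qed

lemma dop_lin_inv_right: "dop_mult h (dop_lin a) (dop_lin_inv h a) = dop_one"
proof
  fix k show "dop_mult h (dop_lin a) (dop_lin_inv h a) k = dop_one k"
  proof (cases k)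
    case 0 then show ?thesis by (simp add: dop_mult_def dop_lin_def dop_lin_inv_def dop_one_def)
  next
    case (Suc k')
    have "dop_mult h (dop_lin a) (dop_lin_inv h a) k = (\<Sum>j\<in>{0,1}. dop_lin a j * fshift h (int j) (dop_lin_inv h a (k - j)))"
      unfolding dop_mult_def using Suc
      by (intro sum.mono_neutral_right) (auto simp: dop_lin_def)
    also have "\<dots> = dop_lin_inv h a (Suc k') - a * fshift h 1 (dop_lin_inv h a k')"
      using Suc by (simp add: dop_lin_def)
    also have "\<dots> = 0"
      unfolding dop_lin_inv_def fshift_prod prod.lessThan_Suc_shift
      by (simp add: add.commute)
    finally show ?thesis using Suc by (simp add: dop_one_def)
  qed
qed

lemma dop_lin_inv_left: "dop_mult h (dop_lin_inv h a) (dop_lin a) = dop_one"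
proof
  fix k show "dop_mult h (dop_lin_inv h a) (dop_lin a) k = dop_one k"
  proof (cases k)
    case 0 then show ?thesis by (simp add: dop_mult_def dop_lin_def dop_lin_inv_def dop_one_def)
  next
    case (Suc k')
    have "dop_mult h (dop_lin_inv h a) (dop_lin a) k = (\<Sum>j\<in>{k',k}. dop_lin_inv h a j * fshift h (int j) (dop_lin a (k - j)))"
      unfolding dop_mult_def using Suc
      by (intro sum.mono_neutral_right) (auto simp: dop_lin_def)
    also have "\<dots> = dop_lin_inv h a (Suc k') - dop_lin_inv h a k' * fshift h (int k') a"
      using Suc by (simp add: dop_lin_def)
    also have "\<dots> = 0"
      unfolding dop_lin_inv_def by simp
    finally show ?thesis using Suc by (simp add: dop_one_def)
  qed
qed

lemma dop_lin_lin: "dop_mult h (dop_lin x) (dop_lin y) =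
   (\<lambda>k. if k = 0 then 1 else if k = 1 then - (x + y) else if k = 2 then x * fshift h 1 y else 0)"
proof
  fix k
  have "dop_mult h (dop_lin x) (dop_lin y) k = (\<Sum>j\<in>{0,1}\<inter>{..k}. dop_lin x j * fshift h (int j) (dop_lin y (k - j)))"
    unfolding dop_mult_def
    by (intro sum.mono_neutral_right) (auto simp: dop_lin_def)
  also have "\<dots> = (if k = 0 then 1 else if k = 1 then - (x + y) else if k = 2 then x * fshift h 1 y else 0)"
  proof -
    consider "k = 0" | "k = 1" | "k = 2" | "k > 2" by linarith
    then show ?thesis
    proof cases
      case 1 then show ?thesis by (simp add: dop_lin_def)
    next
      case 2
      then have "{0,1}\<inter>{..k} = {0,1::nat}" by auto
      then show ?thesis using 2 by (simp add: dop_lin_def)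
    next
      case 3
      then have "{0,1}\<inter>{..k} = {0,1::nat}" by auto
      then show ?thesis using 3 by (simp add: dop_lin_def)
    next
      case 4
      then have "{0,1}\<inter>{..k} = {0,1::nat}" by auto
      then show ?thesis using 4 by (simp add: dop_lin_def)
    qed
  qed
  finally show "dop_mult h (dop_lin x) (dop_lin y) k = (if k = 0 then 1 else if k = 1 then - (x + y) else if k = 2 then x * fshift h 1 y else 0)" .
qed

lemma dop_lin_lin_eq:
  assumes "x + y = u + v" "x * fshift h 1 y = u * fshift h 1 v"
  shows "dop_mult h (dop_lin x) (dop_lin y) = dop_mult h (dop_lin u) (dop_lin v)"
  unfolding dop_lin_lin assms by simp

lemma ferm1:
  assumes "dop_mult h (dop_lin p1) (dop_lin p2) = dop_mult h (dop_lin q1) (dop_lin q2)"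
  shows "dop_mult h (dop_lin p2) (dop_lin_inv h q2) = dop_mult h (dop_lin_inv h p1) (dop_lin q1)"
proof -
  let ?m = "dop_mult h"
  have "?m (dop_lin_inv h p1) (dop_lin q1) = ?m (?m (dop_lin_inv h p1) (dop_lin q1)) (?m (dop_lin q2) (dop_lin_inv h q2))"
    by (simp add: dop_lin_inv_right)
  also have "\<dots> = ?m (dop_lin_inv h p1) (?m (?m (dop_lin q1) (dop_lin q2)) (dop_lin_inv h q2))"
    by (simp add: dop_assoc)
  also have "\<dots> = ?m (?m (dop_lin_inv h p1) (dop_lin p1)) (?m (dop_lin p2) (dop_lin_inv h q2))"
    by (simp add: dop_assoc assms[symmetric])
  also have "\<dots> = ?m (dop_lin p2) (dop_lin_inv h q2)"
    by (simp add: dop_lin_inv_left)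
  finally show ?thesis by simp
qed

lemma ferm2:
  assumes "dop_mult h (dop_lin p1) (dop_lin p2) = dop_mult h (dop_lin q1) (dop_lin q2)"
  shows "dop_mult h (dop_lin_inv h q1) (dop_lin p1) = dop_mult h (dop_lin q2) (dop_lin_inv h p2)"
proof -
  let ?m = "dop_mult h"
  have "?m (dop_lin_inv h q1) (dop_lin p1) = ?m (?m (dop_lin_inv h q1) (dop_lin p1)) (?m (dop_lin p2) (dop_lin_inv h p2))"
    by (simp add: dop_lin_inv_right)
  also have "\<dots> = ?m (dop_lin_inv h q1) (?m (?m (dop_lin p1) (dop_lin p2)) (dop_lin_inv h p2))"
    by (simp add: dop_assoc)
  also have "\<dots> = ?m (?m (dop_lin_inv h q1) (dop_lin q1)) (?m (dop_lin q2) (dop_lin_inv h p2))"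
    by (simp add: dop_assoc assms)
  also have "\<dots> = ?m (dop_lin q2) (dop_lin_inv h p2)"
    by (simp add: dop_lin_inv_left)
  finally show ?thesis by simp
qed


lemma inv2_cancel: "dop_mult h (dop_mult h (dop_lin p1) (dop_lin p2)) (dop_mult h (dop_lin_inv h p2) (dop_lin_inv h p1)) = dop_one"
proof -
  let ?m = "dop_mult h"
  have "?m (?m (dop_lin p1) (dop_lin p2)) (?m (dop_lin_inv h p2) (dop_lin_inv h p1))
      = ?m (dop_lin p1) (?m (?m (dop_lin p2) (dop_lin_inv h p2)) (dop_lin_inv h p1))"
    by (simp only: dop_assoc)
  also have "\<dots> = dop_one" by (simp add: dop_lin_inv_right)
  finally show ?thesis .
qed

lemma bos_inv:
  assumes "dop_mult h (dop_lin p1) (dop_lin p2) = dop_mult h (dop_lin q1) (dop_lin q2)"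
  shows "dop_mult h (dop_lin_inv h p2) (dop_lin_inv h p1) = dop_mult h (dop_lin_inv h q2) (dop_lin_inv h q1)"
proof -
  let ?m = "dop_mult h"
  have e1: "?m (?m (dop_lin_inv h q2) (dop_lin_inv h q1)) (?m (dop_lin q1) (dop_lin q2)) = dop_one"
  proof -
    have "?m (?m (dop_lin_inv h q2) (dop_lin_inv h q1)) (?m (dop_lin q1) (dop_lin q2))
      = ?m (dop_lin_inv h q2) (?m (?m (dop_lin_inv h q1) (dop_lin q1)) (dop_lin q2))"
      by (simp only: dop_assoc)
    also have "\<dots> = dop_one" by (simp add: dop_lin_inv_left)
    finally show ?thesis .
  qed
  have "?m (dop_lin_inv h p2) (dop_lin_inv h p1) =
     ?m (?m (?m (dop_lin_inv h q2) (dop_lin_inv h q1)) (?m (dop_lin q1) (dop_lin q2))) (?m (dop_lin_inv h p2) (dop_lin_inv h p1))"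
    by (simp only: e1 dop_one_left)
  also have "\<dots> = ?m (?m (dop_lin_inv h q2) (dop_lin_inv h q1)) (?m (?m (dop_lin p1) (dop_lin p2)) (?m (dop_lin_inv h p2) (dop_lin_inv h p1)))"
    by (simp only: dop_assoc assms)
  also have "\<dots> = ?m (dop_lin_inv h q2) (dop_lin_inv h q1)"
    by (simp only: inv2_cancel dop_one_right)
  finally show ?thesis .
qed

fun cnt :: "int \<Rightarrow> (nat \<Rightarrow> int) \<Rightarrow> nat \<Rightarrow> nat" where
  "cnt v s 0 = 0"
| "cnt v s (Suc j) = cnt v s j + (if s (Suc j) = v then 1 else 0)"

lemma cnt_card: "cnt v s j = card {k\<in>{1..j}. s k = v}"
proof (induction j)
  case 0 then show ?case by simp
next
  case (Suc j)
  have "{k\<in>{1..Suc j}. s k = v} = {k\<in>{1..j}. s k = v} \<union> (if s (Suc j) = v then {Suc j} else {})"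
    by (auto simp: le_Suc_eq)
  then show ?case using Suc by (auto simp: card_insert_if)
qed

lemma cnt_mono: "i \<le> j \<Longrightarrow> cnt v s i \<le> cnt v s j"
proof (induction j)
  case (Suc j)
  show ?case
  proof (cases "i \<le> j")
    case True
    then have "cnt v s i \<le> cnt v s j" using Suc by blast
    then show ?thesis by simp
  next
    case False
    then have "i = Suc j" using Suc.prems by simp
    then show ?thesis by simp
  qed
qed simp

lemma cnt_agree: "(\<And>k. j0 < k \<Longrightarrow> k \<le> j \<Longrightarrow> s' k = s k) \<Longrightarrow> cnt v s' j0 = cnt v s j0 \<Longrightarrow> j0 \<le> j
   \<Longrightarrow> cnt v s' j = cnt v s j"
proof (induction j)
  case (Suc j)
  show ?case
  proof (cases "j0 \<le> j")
    case True
    then have "cnt v s' j = cnt v s j" using Suc by simp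
    moreover have "s' (Suc j) = s (Suc j)" using Suc.prems True by simp
    ultimately show ?thesis by simp
  next
    case False
    then have "j0 = Suc j" using Suc.prems by simp
    then show ?thesis using Suc.prems by simp
  qed
qed simp

lemma swap_at_simps:
  "swap_at i s i = s (i+1)" "swap_at i s (i+1) = s i" "swap_at i s (Suc i) = s i"
  "k \<noteq> i \<Longrightarrow> k \<noteq> i + 1 \<Longrightarrow> swap_at i s k = s k"
  by (auto simp: swap_at_def)

lemma cnt_swap_before: "j < i \<Longrightarrow> cnt v (swap_at i s) j = cnt v s j"
  by (rule cnt_agree[of 0]) (auto simp: swap_at_def)

lemma cnt_swap_at: "1 \<le> i \<Longrightarrow> cnt v (swap_at i s) i = cnt v s (i - 1) + (if s (i+1) = v then 1 else 0)"
proof -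
  assume "1 \<le> i"
  then obtain i0 where i: "i = Suc i0" by (cases i) auto
  show ?thesis using cnt_swap_before[of i0 i v s] by (simp add: i swap_at_def)
qed

lemma cnt_swap_after: "1 \<le> i \<Longrightarrow> i + 1 \<le> j \<Longrightarrow> cnt v (swap_at i s) j = cnt v s j"
proof -
  assume "1 \<le> i" "i + 1 \<le> j"
  then obtain i0 where i: "i = Suc i0" by (cases i) auto
  have "cnt v (swap_at i s) (i+1) = cnt v s (i+1)"
    using cnt_swap_before[of i0 i v s] by (simp add: i swap_at_def)
  moreover have "\<And>k. i + 1 < k \<Longrightarrow> k \<le> j \<Longrightarrow> swap_at i s k = s k" by (simp add: swap_at_def)
  ultimately show ?thesis using cnt_agree[of "i+1" j "swap_at i s" s v] \<open>i + 1 \<le> j\<close> by blast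
qed

lemma cnt_swap_other: "1 \<le> i \<Longrightarrow> j \<noteq> i \<Longrightarrow> cnt v (swap_at i s) j = cnt v s j"
  using cnt_swap_before cnt_swap_after by (cases "j < i") auto

lemma parseqs_vals: "s \<in> parseqs m n \<Longrightarrow> 1 \<le> i \<Longrightarrow> i \<le> m + n \<Longrightarrow> s i = 1 \<or> s i = -1"
  by (auto simp: parseqs_def)

lemma parseqs_out: "s \<in> parseqs m n \<Longrightarrow> \<not> (1 \<le> i \<and> i \<le> m + n) \<Longrightarrow> s i = 0"
  by (auto simp: parseqs_def)

lemma parseqs_cnt1: "s \<in> parseqs m n \<Longrightarrow> cnt 1 s (m+n) = m"
  by (auto simp: parseqs_def cnt_card)

lemma cnt_sum: "(\<And>k. 1 \<le> k \<Longrightarrow> k \<le> j \<Longrightarrow> s k = 1 \<or> s k = -1) \<Longrightarrow> cnt 1 s j + cnt (-1) s j = j"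
  by (induction j) auto

lemma parseqs_cnt2: "s \<in> parseqs m n \<Longrightarrow> cnt (-1) s (m+n) = n"
  using cnt_sum[of "m+n" s] parseqs_cnt1[of s m n] parseqs_vals[of s m n] by force

lemma swap_parseqs: assumes "s \<in> parseqs m n" "1 \<le> i" "i < m + n"
  shows "swap_at i s \<in> parseqs m n"
proof -
  have "cnt 1 (swap_at i s) (m+n) = m"
    using cnt_swap_after[of i "m+n" 1 s] assms parseqs_cnt1[OF assms(1)] by simp
  moreover have "\<forall>k. (1 \<le> k \<and> k \<le> m + n \<longrightarrow> swap_at i s k \<in> {1, -1}) \<and>
          (\<not> (1 \<le> k \<and> k \<le> m + n) \<longrightarrow> swap_at i s k = 0)"
    using assms by (auto simp: swap_at_def parseqs_def)
  ultimately show ?thesis by (simp add: parseqs_def cnt_card)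
qed

lemma std_parseqs: "std_parseq m n \<in> parseqs m n"
proof -
  have "{i \<in> {1..m+n}. std_parseq m n i = 1} = {1..m}" by (auto simp: std_parseq_def)
  then show ?thesis by (auto simp: parseqs_def std_parseq_def)
qed

definition colen :: "nat \<Rightarrow> (nat \<Rightarrow> int) \<Rightarrow> nat \<Rightarrow> int" where
  "colen m mu c = int (card {r\<in>{1..m}. mu r \<ge> int c}) + mu (m + c)"

definition Fw :: "nat \<Rightarrow> nat \<Rightarrow> (nat \<Rightarrow> int) \<Rightarrow> (nat \<Rightarrow> int) \<Rightarrow> nat \<Rightarrow> int" where
  "Fw m n mu s i = (if 1 \<le> i \<and> i \<le> m + n then
      (if s i = 1 then max (mu (cnt 1 s i) - int (cnt (-1) s i)) 0
       else max (colen m mu (cnt (-1) s i) - int (cnt 1 s i)) 0) else mu i)"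

lemma pw_mono: assumes "polyweight m n mu" "1 \<le> a" "a \<le> b" "b \<le> m" shows "mu b \<le> mu a"
  using assms(3,4)
proof (induction b)
  case 0 then show ?case by simp
next
  case (Suc b)
  show ?case
  proof (cases "a = Suc b")
    case False
    then have "mu b \<le> mu a" using Suc by simp
    moreover have "mu (Suc b) \<le> mu b" using assms(1) Suc False assms(2) unfolding polyweight_def
      by (metis Suc_eq_plus1 Suc_le_lessD le_Suc_eq le_trans)
    ultimately show ?thesis by simp
  qed simp
qed

lemma box_lemma:
  assumes pw: "polyweight m n mu" and r: "1 \<le> r" "r \<le> m" and c: "c + 1 \<le> n"
  shows "mu r \<ge> int c + 1 \<longleftrightarrow> colen m mu (c+1) \<ge> int r"
proof
  assume a: "mu r \<ge> int c + 1"
  have "{1..r} \<subseteq> {r'\<in>{1..m}. mu r' \<ge> int (c+1)}"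
    using pw_mono[OF pw] a r by fastforce
  then have "r \<le> card {r'\<in>{1..m}. mu r' \<ge> int (c+1)}"
    using card_mono[of "{r'\<in>{1..m}. mu r' \<ge> int (c+1)}" "{1..r}"] by simp
  moreover have "mu (m + (c+1)) \<ge> 0" using pw c unfolding polyweight_def by auto
  ultimately show "colen m mu (c+1) \<ge> int r" unfolding colen_def by linarith
next
  assume a: "colen m mu (c+1) \<ge> int r"
  show "mu r \<ge> int c + 1"
  proof (rule ccontr)
    assume b: "\<not> mu r \<ge> int c + 1"
    have "mu m \<le> mu r" using pw_mono[OF pw] r by simp
    then have "mu (m + (c+1)) = 0" using pw c r b unfolding polyweight_def by auto
    moreover have "{r'\<in>{1..m}. mu r' \<ge> int (c+1)} \<subseteq> {1..r-1}"
    proof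
      fix x assume x: "x \<in> {r'\<in>{1..m}. mu r' \<ge> int (c+1)}"
      have "x < r"
      proof (rule ccontr)
        assume "\<not> x < r"
        then have "mu x \<le> mu r" using pw_mono[OF pw, of r x] x r by auto
        then show False using x b by auto
      qed
      then show "x \<in> {1..r-1}" using x by auto
    qed
    then have "card {r'\<in>{1..m}. mu r' \<ge> int (c+1)} \<le> r - 1"
      using card_mono[of "{1..r-1}"] by fastforce
    ultimately show False using a r unfolding colen_def by linarith
  qed
qed

lemma oddrefl_invol: "oddrefl i (oddrefl i nu) = nu"
  by (auto simp: oddrefl_def fun_eq_iff)

lemma Fw_swap_pos:
  assumes pw: "polyweight m n mu" and s: "s \<in> parseqs m n" and i: "1 \<le> i" "i < m + n"
    and si: "s i = 1" "s (i+1) = -1"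
  shows "Fw m n mu (swap_at i s) = oddrefl i (Fw m n mu s)"
proof -
  let ?s' = "swap_at i s"
  define r where "r = cnt 1 s i"
  define c where "c = cnt (-1) s i"
  obtain i0 where i0: "i = Suc i0" using i by (cases i) auto
  have r1: "cnt 1 s i0 + 1 = r" "cnt (-1) s i0 = c" using si unfolding r_def c_def i0 by auto
  have R1: "cnt 1 s (i+1) = r" "cnt (-1) s (i+1) = c + 1" using si unfolding r_def c_def by auto
  have S1: "cnt 1 ?s' i = r - 1" "cnt (-1) ?s' i = c + 1"
    using cnt_swap_at[OF i(1), of _ s] si r1 i0 by auto
  have S2: "cnt 1 ?s' (i+1) = r" "cnt (-1) ?s' (i+1) = c + 1"
    using cnt_swap_after[OF i(1), of "i+1"] R1 by auto
  have rpos: "1 \<le> r" using r1 by simp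
  have rm: "r \<le> m" using cnt_mono[of i "m+n" 1 s] parseqs_cnt1[OF s] i unfolding r_def by simp
  have cn: "c + 1 \<le> n" using cnt_mono[of "i+1" "m+n" "-1" s] parseqs_cnt2[OF s] i R1 by simp
  have box: "mu r \<ge> int c + 1 \<longleftrightarrow> colen m mu (c+1) \<ge> int r" by (rule box_lemma[OF pw rpos rm cn])
  have Fi: "Fw m n mu s i = max (mu r - int c) 0" using i si unfolding Fw_def r_def c_def by simp
  have Fi1: "Fw m n mu s (i+1) = max (colen m mu (c+1) - int r) 0" using i si R1 unfolding Fw_def by simp
  have Gi: "Fw m n mu ?s' i = max (colen m mu (c+1) - int (r - 1)) 0"
    using i si S1 unfolding Fw_def by (simp add: swap_at_simps)
  have Gi1: "Fw m n mu ?s' (i+1) = max (mu r - int (c + 1)) 0"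
    using i si S2 unfolding Fw_def by (simp add: swap_at_simps)
  have Go: "Fw m n mu ?s' j = Fw m n mu s j" if "j \<noteq> i" "j \<noteq> i + 1" for j
    using that cnt_swap_other[OF i(1)] unfolding Fw_def by (simp add: swap_at_simps)
  show ?thesis
  proof (cases "mu r \<ge> int c + 1")
    case True
    then have "colen m mu (c+1) \<ge> int r" using box by simp
    then show ?thesis using True rpos
      by (auto simp: fun_eq_iff oddrefl_def Fi Fi1[simplified] Gi Gi1[simplified] Go of_nat_diff)
  next
    case False
    then have "colen m mu (c+1) < int r" using box by simp
    then show ?thesis using False rpos
      by (auto simp: fun_eq_iff oddrefl_def Fi Fi1[simplified] Gi Gi1[simplified] Go of_nat_diff)
  qed
qed

lemma swap_swap: "swap_at i (swap_at i s) = s"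
  by (auto simp: swap_at_def fun_eq_iff)

lemma Fw_swap:
  assumes pw: "polyweight m n mu" and s: "s \<in> parseqs m n" and i: "1 \<le> i" "i < m + n"
    and si: "s i \<noteq> s (i+1)"
  shows "Fw m n mu (swap_at i s) = oddrefl i (Fw m n mu s)"
proof -
  have v: "s i = 1 \<or> s i = -1" "s (i+1) = 1 \<or> s (i+1) = -1"
    using parseqs_vals[OF s] i by auto
  show ?thesis
  proof (cases "s i = 1")
    case True
    then show ?thesis using Fw_swap_pos[OF pw s i] si v by auto
  next
    case False
    let ?s' = "swap_at i s"
    have "Fw m n mu (swap_at i ?s') = oddrefl i (Fw m n mu ?s')"
      using Fw_swap_pos[OF pw swap_parseqs[OF s i] i] False si v by (auto simp: swap_at_simps)
    then show ?thesis by (metis oddrefl_invol swap_swap)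
  qed
qed

lemma cnt_std: "j \<le> m + n \<Longrightarrow> cnt 1 (std_parseq m n) j = min j m \<and> cnt (-1) (std_parseq m n) j = j - m"
  by (induction j) (auto simp: std_parseq_def)

lemma Fw_std: assumes pw: "polyweight m n mu" shows "Fw m n mu (std_parseq m n) = mu"
proof
  fix i
  show "Fw m n mu (std_parseq m n) i = mu i"
  proof (cases "1 \<le> i \<and> i \<le> m + n")
    case False then show ?thesis unfolding Fw_def by auto
  next
    case True
    have nn: "mu i \<ge> 0" using pw True unfolding polyweight_def by auto
    show ?thesis
    proof (cases "i \<le> m")
      case True
      then show ?thesis using cnt_std[of i m n] \<open>1 \<le> i \<and> i \<le> m + n\<close> nn
        by (simp add: Fw_def std_parseq_def)
    next
      case False
      define c where "c = i - m"
      have ic: "i = m + c" "1 \<le> c" "c \<le> n" using False True unfolding c_def by auto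
      have st: "std_parseq m n i = -1" using False True by (simp add: std_parseq_def)
      have F: "Fw m n mu (std_parseq m n) i = max (colen m mu c - int m) 0"
        using cnt_std[of i m n] True False st unfolding Fw_def c_def by simp
      have cardle: "card {r\<in>{1..m}. mu r \<ge> int c} \<le> m"
      proof -
        have "card {r\<in>{1..m}. mu r \<ge> int c} \<le> card {1..m}" by (rule card_mono) auto
        then show ?thesis by simp
      qed
      show ?thesis
      proof (cases "mu (m + c) > 0")
        case True
        show ?thesis
        proof (cases "m = 0")
          case True
          then show ?thesis using F ic nn unfolding colen_def by simp
        next
          case False
          then have m0: "m > 0" by simp
        then have "int c \<le> mu m" using pw \<open>mu (m + c) > 0\<close> ic unfolding polyweight_def by (metis less_irrefl not_le)
        then have "{r\<in>{1..m}. mu r \<ge> int c} = {1..m}"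
          using pw_mono[OF pw] by fastforce
        then show ?thesis using F ic nn unfolding colen_def by simp
        qed
      next
        case False
        then have "mu (m + c) = 0" using nn ic by simp
        then show ?thesis using F cardle ic unfolding colen_def by simp
      qed
    qed
  qed
qed

lemma hwrel_Fw: assumes pw: "polyweight m n mu"
  shows "hwrel m n mu s nu \<Longrightarrow> s \<in> parseqs m n \<and> nu = Fw m n mu s"
proof (induction rule: hwrel.induct)
  case std then show ?case using std_parseqs Fw_std[OF pw] by simp
next
  case (refl_odd s nu i)
  then show ?case using swap_parseqs Fw_swap[OF pw] by auto
qed

lemma sorted_std:
  assumes s: "s \<in> parseqs m n"
    and ns: "\<And>i. 1 \<le> i \<Longrightarrow> i < m + n \<Longrightarrow> \<not> (s i = -1 \<and> s (i+1) = 1)"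
  shows "s = std_parseq m n"
proof -
  have srt: "s k = -1" if "s j = -1" "1 \<le> j" "j \<le> k" "k \<le> m + n" for j k
    using that(3,4)
  proof (induction k)
    case 0 then show ?case using that by simp
  next
    case (Suc k)
    show ?case
    proof (cases "j = Suc k")
      case True then show ?thesis using that by simp
    next
      case False
      then have "s k = -1" using Suc by simp
      moreover have "1 \<le> k" using False Suc that by simp
      ultimately show ?thesis using ns[of k] parseqs_vals[OF s, of "Suc k"] Suc by auto
    qed
  qed
  have card: "card {j\<in>{1..m+n}. s j = 1} = m" using s by (simp add: parseqs_def)
  show ?thesis
  proof
    fix j
    show "s j = std_parseq m n j"
    proof (cases "1 \<le> j \<and> j \<le> m + n")
      case False then show ?thesis using parseqs_out[OF s] by (auto simp: std_parseq_def)
    next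
      case True
      show ?thesis
      proof (cases "j \<le> m")
        case True
        have "s j = 1"
        proof (rule ccontr)
          assume "s j \<noteq> 1"
          then have sj: "s j = -1" using parseqs_vals[OF s] \<open>1 \<le> j \<and> j \<le> m + n\<close> by auto
          have "{k\<in>{1..m+n}. s k = 1} \<subseteq> {1..j-1}"
          proof
            fix k assume k: "k \<in> {k\<in>{1..m+n}. s k = 1}"
            have "\<not> j \<le> k" using srt[OF sj, of k] k \<open>1 \<le> j \<and> j \<le> m + n\<close> by auto
            then show "k \<in> {1..j-1}" using k by auto
          qed
          then have "card {k\<in>{1..m+n}. s k = 1} \<le> j - 1" using card_mono[of "{1..j-1}"] by fastforce
          then show False using card True \<open>1 \<le> j \<and> j \<le> m + n\<close> by simp
        qed
        then show ?thesis using True \<open>1 \<le> j \<and> j \<le> m + n\<close> by (simp add: std_parseq_def)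
      next
        case False
        have "s j = -1"
        proof (rule ccontr)
          assume "s j \<noteq> -1"
          then have sj: "s j = 1" using parseqs_vals[OF s] \<open>1 \<le> j \<and> j \<le> m + n\<close> by auto
          have "{1..j} \<subseteq> {k\<in>{1..m+n}. s k = 1}"
          proof
            fix k assume k: "k \<in> {1..j}"
            have "s k = 1"
            proof (rule ccontr)
              assume "s k \<noteq> 1"
              then have "s k = -1" using parseqs_vals[OF s, of k] k \<open>1 \<le> j \<and> j \<le> m + n\<close> by auto
              then have "s j = -1" using srt[of k j] k \<open>1 \<le> j \<and> j \<le> m + n\<close> by auto
              then show False using sj by simp
            qed
            then show "k \<in> {k\<in>{1..m+n}. s k = 1}" using k \<open>1 \<le> j \<and> j \<le> m + n\<close> by auto
          qed
          then have "j \<le> card {k\<in>{1..m+n}. s k = 1}" using card_mono[of _ "{1..j}"] by fastforce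
          then show False using card False by simp
        qed
        then show ?thesis using False \<open>1 \<le> j \<and> j \<le> m + n\<close> by (simp add: std_parseq_def)
      qed
    qed
  qed
qed

definition wmeas :: "nat \<Rightarrow> nat \<Rightarrow> (nat \<Rightarrow> int) \<Rightarrow> nat" where
  "wmeas m n s = (m + n) * (m + n) - (\<Sum>j\<in>{1..m+n}. cnt 1 s j)"

lemma wmeas_swap:
  assumes s: "s \<in> parseqs m n" and i: "1 \<le> i" "i < m + n" and si: "s i = -1" "s (i+1) = 1"
  shows "wmeas m n (swap_at i s) < wmeas m n s"
proof -
  let ?s' = "swap_at i s"
  have ci: "cnt 1 ?s' i = cnt 1 s i + 1"
    using cnt_swap_at[OF i(1), of 1 s] si i by (cases i) auto
  have A: "(\<Sum>j\<in>{1..m+n}. cnt 1 ?s' j) = cnt 1 ?s' i + (\<Sum>j\<in>{1..m+n} - {i}. cnt 1 ?s' j)"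
    using i by (subst sum.remove[of _ i]) auto
  have B: "(\<Sum>j\<in>{1..m+n}. cnt 1 s j) = cnt 1 s i + (\<Sum>j\<in>{1..m+n} - {i}. cnt 1 s j)"
    using i by (subst sum.remove[of _ i]) auto
  have C: "(\<Sum>j\<in>{1..m+n} - {i}. cnt 1 ?s' j) = (\<Sum>j\<in>{1..m+n} - {i}. cnt 1 s j)"
    using cnt_swap_other[OF i(1)] by (intro sum.cong) auto
  have le: "(\<Sum>j\<in>{1..m+n}. cnt 1 ?s' j) \<le> (m + n) * (m + n)"
  proof -
    have "(\<Sum>j\<in>{1..m+n}. cnt 1 ?s' j) \<le> (\<Sum>j\<in>{1..m+n}. (m+n))"
      using cnt_mono[of _ "m+n" 1 ?s'] cnt_sum[of "m+n" ?s'] parseqs_vals[OF swap_parseqs[OF s i]]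
      by (intro sum_mono) (metis le_add1 le_trans atLeastAtMost_iff)
    then show ?thesis by simp
  qed
  show ?thesis unfolding wmeas_def using A B C ci le by linarith
qed

lemma hwrel_exists: assumes pw: "polyweight m n mu"
  shows "s \<in> parseqs m n \<Longrightarrow> hwrel m n mu s (Fw m n mu s)"
proof (induction "wmeas m n s" arbitrary: s rule: less_induct)
  case less
  show ?case
  proof (cases "\<exists>i. 1 \<le> i \<and> i < m + n \<and> s i = -1 \<and> s (i+1) = 1")
    case False
    then have "s = std_parseq m n" using sorted_std[OF less.prems] by blast
    then show ?thesis using hwrel.std[of m n mu] Fw_std[OF pw] by simp
  next
    case True
    then obtain i where i: "1 \<le> i" "i < m + n" "s i = -1" "s (i+1) = 1" by blast
    let ?s' = "swap_at i s"
    have s': "?s' \<in> parseqs m n" using swap_parseqs[OF less.prems i(1,2)] .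
    have "hwrel m n mu ?s' (Fw m n mu ?s')"
      using less.hyps[OF wmeas_swap[OF less.prems i] s'] .
    moreover have "?s' i \<noteq> ?s' (i+1)" using i by (simp add: swap_at_simps)
    ultimately have "hwrel m n mu (swap_at i ?s') (oddrefl i (Fw m n mu ?s'))"
      using hwrel.refl_odd[of m n mu ?s' "Fw m n mu ?s'" i] i by blast
    moreover have "oddrefl i (Fw m n mu ?s') = Fw m n mu s"
      using Fw_swap[OF pw less.prems i(1,2)] i oddrefl_invol[of i "Fw m n mu s"] by simp
    ultimately show ?thesis by (simp only: swap_swap)
  qed
qed

lemma lamS_Fw: assumes "polyweight m n mu" "s \<in> parseqs m n"
  shows "lamS m n mu s = Fw m n mu s"
  unfolding lamS_def
proof (rule the_equality)
  show "hwrel m n mu s (Fw m n mu s)" by (rule hwrel_exists[OF assms])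
  fix nu assume "hwrel m n mu s nu"
  then show "nu = Fw m n mu s" using hwrel_Fw[OF assms(1)] by blast
qed

lemma lamS_nonneg: assumes "polyweight m n mu" "s \<in> parseqs m n" "1 \<le> i" "i \<le> m + n"
  shows "lamS m n mu s i \<ge> 0"
  using assms lamS_Fw[OF assms(1,2)] by (simp add: Fw_def)

lemma lamS_swap: assumes "polyweight m n mu" "s \<in> parseqs m n" "1 \<le> i" "i < m + n" "s i \<noteq> s (i+1)"
  shows "lamS m n mu (swap_at i s) = oddrefl i (lamS m n mu s)"
  using lamS_Fw[OF assms(1) swap_parseqs[OF assms(2,3,4)]] lamS_Fw[OF assms(1,2)] Fw_swap[OF assms] by simp

lemma sum_bos:
  fixes ti tip ti1 ti1p am a0 cc cp y yp ym u up um k :: "'a::field"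
  assumes nz: "tip\<noteq>0" "a0\<noteq>0" "y\<noteq>0" "u\<noteq>0" "ti1p\<noteq>0" "cc\<noteq>0" "ti1\<noteq>0"
    and W1: "(y*um - u*ym)*ti1 = k*ti*am*cc"
    and W2: "(yp*u - up*y)*ti1p = k*tip*a0*cp"
  shows "ti*am*yp/(tip*a0*y) + ti1*ym*cp/(ti1p*y*cc) = ti*am*up/(tip*a0*u) + ti1*um*cp/(ti1p*u*cc)"
proof -
  have e1: "ti*am*yp/(tip*a0*y) - ti*am*up/(tip*a0*u) = ti*am*(yp*u - up*y)/(tip*a0*y*u)"
    using nz by (simp add: field_simps)
  also have "\<dots> = ti*am*(k*tip*a0*cp)/(ti1p*tip*a0*y*u)"
  proof -
    have d: "yp*u - up*y = k*tip*a0*cp/ti1p" using W2 nz by (simp add: field_simps)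
    show ?thesis unfolding d using nz by (simp add: field_simps)
  qed
  finally have A: "ti*am*yp/(tip*a0*y) - ti*am*up/(tip*a0*u) = ti*am*(k*tip*a0*cp)/(ti1p*tip*a0*y*u)" .
  have "ti1*um*cp/(ti1p*u*cc) - ti1*ym*cp/(ti1p*y*cc) = ti1*cp*(y*um - u*ym)/(ti1p*y*u*cc)"
    using nz by (simp add: field_simps)
  also have "\<dots> = ti1*cp*(k*ti*am*cc)/(ti1*ti1p*y*u*cc)"
  proof -
    have d: "y*um - u*ym = k*ti*am*cc/ti1" using W1 nz by (simp add: field_simps)
    show ?thesis unfolding d using nz by (simp add: field_simps)
  qed
  finally have B: "ti1*um*cp/(ti1p*u*cc) - ti1*ym*cp/(ti1p*y*cc) = ti1*cp*(k*ti*am*cc)/(ti1*ti1p*y*u*cc)" .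
  have "ti*am*(k*tip*a0*cp)/(ti1p*tip*a0*y*u) = ti1*cp*(k*ti*am*cc)/(ti1*ti1p*y*u*cc)"
    using nz by (simp add: field_simps)
  then show ?thesis using A B by (simp add: algebra_simps)
qed

lemma sum_ferm:
  fixes ti tip ti1 ti1m ui uim ui1 ui1p z phi psi phip psip am a0 ap cm c0 cp y yp u um k :: "'a::field"
  assumes nz: "tip\<noteq>0" "ti1m\<noteq>0" "uim\<noteq>0" "ui1p\<noteq>0" "z\<noteq>0" "a0\<noteq>0" "c0\<noteq>0" "y\<noteq>0" "u\<noteq>0"
    and R1: "ti*z = tip*phi" and R2: "ti1*z = ti1m*psi" and R3: "ui*z = uim*psip" and R4: "ui1*z = ui1p*phip"
    and W1: "y*um = k*(phi*am*c0 - psi*a0*cm)" and W2: "yp*u = k*(phip*a0*cp - psip*ap*c0)"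
  shows "ti*am*yp/(tip*a0*y) + ui*ap*um/(uim*a0*u) = ti1*yp*cm/(ti1m*y*c0) + ui1*um*cp/(ui1p*u*c0)"
proof -
  have ti: "ti = tip*phi/z" using R1 nz by (simp add: field_simps)
  have ti1: "ti1 = ti1m*psi/z" using R2 nz by (simp add: field_simps)
  have ui: "ui = uim*psip/z" using R3 nz by (simp add: field_simps)
  have ui1: "ui1 = ui1p*phip/z" using R4 nz by (simp add: field_simps)
  have A: "ti*am*yp/(tip*a0*y) - ti1*yp*cm/(ti1m*y*c0) = yp*(phi*am*c0 - psi*a0*cm)/(z*a0*y*c0)"
    using nz unfolding ti ti1 by (simp add: field_simps)
  have B: "ui1*um*cp/(ui1p*u*c0) - ui*ap*um/(uim*a0*u) = um*(phip*a0*cp - psip*ap*c0)/(z*a0*u*c0)"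
    using nz unfolding ui ui1 by (simp add: field_simps)
  have "yp*(phi*am*c0 - psi*a0*cm)/(z*a0*y*c0) = um*(phip*a0*cp - psip*ap*c0)/(z*a0*u*c0)"
  proof (cases "k = 0")
    case True
    then show ?thesis using W1 W2 nz by simp
  next
    case False
    have d: "phi*am*c0 - psi*a0*cm = y*um/k" "phip*a0*cp - psip*ap*c0 = yp*u/k"
      using W1 W2 False by (simp_all add: field_simps)
    show ?thesis unfolding d using nz False by (simp add: field_simps)
  qed
  then show ?thesis using A B by (simp add: algebra_simps)
qed

lemma linf_nz[simp]: "linf c \<noteq> 0"
  by (simp add: linf_def)

lemma Tfac_ratio_nat:
  "(\<Prod>j\<in>{1..int N}. linf (w + of_int e * of_int j * h)) * linf w =
   pshift h e (\<Prod>j\<in>{1..int N}. linf (w + of_int e * of_int j * h)) * linf (w + of_int e * of_int (int N) * h)"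
proof (induction N)
  case 0 then show ?case by simp
next
  case (Suc N)
  let ?f = "\<lambda>j::int. linf (w + of_int e * of_int j * h)"
  have set: "{1..int (Suc N)} = insert (int N + 1) {1..int N}" by auto
  have P: "prod ?f {1..int (Suc N)} = ?f (int N + 1) * prod ?f {1..int N}"
    unfolding set by (subst prod.insert) auto
  have sh: "pshift h e (?f (int N + 1)) = linf (w + of_int e * of_int (int N) * h)"
    by (simp add: pshift_linf algebra_simps)
  show ?case
    unfolding P pshift_mult sh
    using Suc by (simp add: algebra_simps)
qed

lemma Tfac_ratio:
  assumes "L \<ge> 0"
  shows "(\<Prod>j\<in>{1..L}. linf (w + of_int e * of_int j * h)) * linf w =
   pshift h e (\<Prod>j\<in>{1..L}. linf (w + of_int e * of_int j * h)) * linf (w + of_int e * of_int L * h)"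
proof -
  obtain N where "L = int N" using assms by (metis nonneg_eq_int)
  then show ?thesis using Tfac_ratio_nat by simp
qed

lemma Tpol_nz[simp]: "Tpol h m n p z lam s i \<noteq> 0"
  by (simp add: Tpol_def)

lemma Tpol_ratio:
  assumes K: "K \<subseteq> {..<p}"
    and nn: "\<And>k. k \<in> K \<Longrightarrow> lamS m n (lam k) s j \<ge> 0"
    and zz: "\<And>k. k < p \<Longrightarrow> k \<notin> K \<Longrightarrow> lamS m n (lam k) s j = 0"
  shows "Tpol h m n p z lam s j * (\<Prod>k\<in>K. linf (- z k)) =
         pshift h (s j) (Tpol h m n p z lam s j) *
         (\<Prod>k\<in>K. linf (- z k + of_int (s j) * of_int (lamS m n (lam k) s j) * h))"
proof -
  let ?T = "\<lambda>k. \<Prod>j'\<in>{1..lamS m n (lam k) s j}. linf (- z k + of_int (s j) * of_int j' * h)"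
  have fin: "finite K" using K finite_subset by blast
  have "prod ?T {..<p} = prod ?T K"
    using K zz by (intro prod.mono_neutral_right) auto
  then have "Tpol h m n p z lam s j = prod ?T K" unfolding Tpol_def by simp
  then have T: "Tpol h m n p z lam s j = prod ?T K" .
  have "prod ?T K * (\<Prod>k\<in>K. linf (- z k)) = (\<Prod>k\<in>K. ?T k * linf (- z k))"
    by (simp add: prod.distrib)
  also have "\<dots> = (\<Prod>k\<in>K. pshift h (s j) (?T k) * linf (- z k + of_int (s j) * of_int (lamS m n (lam k) s j) * h))"
    using nn by (intro prod.cong refl Tfac_ratio) auto
  also have "\<dots> = pshift h (s j) (prod ?T K) *
         (\<Prod>k\<in>K. linf (- z k + of_int (s j) * of_int (lamS m n (lam k) s j) * h))"
    by (simp add: prod.distrib pshift_prod)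
  finally show ?thesis unfolding T .
qed

lemma Rop_local:
  assumes i: "1 \<le> i" "i < m + n"
    and oth: "\<And>j. 1 \<le> j \<Longrightarrow> j \<le> m + n \<Longrightarrow> j \<noteq> i \<Longrightarrow> j \<noteq> i + 1 \<Longrightarrow>
               s' j = s j \<and> Rcoef h m n p z lam s' y' j = Rcoef h m n p z lam s y j"
    and mid: "dop_mult h (dop_factor h (s' i) (Rcoef h m n p z lam s' y' i))
                         (dop_factor h (s' (i+1)) (Rcoef h m n p z lam s' y' (i+1)))
            = dop_mult h (dop_factor h (s i) (Rcoef h m n p z lam s y i))
                         (dop_factor h (s (i+1)) (Rcoef h m n p z lam s y (i+1)))"
  shows "Rop h m n p z lam s' y' = Rop h m n p z lam s y"
proof -
  define g where "g = (\<lambda>acc j. dop_mult h acc (dop_factor h (s j) (Rcoef h m n p z lam s y j)))"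
  define g' where "g' = (\<lambda>acc j. dop_mult h acc (dop_factor h (s' j) (Rcoef h m n p z lam s' y' j)))"
  have L: "[1..<m+n+1] = [1..<i] @ [i, i+1] @ [i+2..<m+n+1]"
  proof -
    have "[1..<m+n+1] = [1..<i] @ [i..<m+n+1]" using i upt_add_eq_append[of 1 i "m + n + 1 - i"] by simp
    also have "[i..<m+n+1] = [i, i+1] @ [i+2..<m+n+1]" using i
      by (simp add: upt_conv_Cons)
    finally show ?thesis .
  qed
  have A: "foldl g' acc [1..<i] = foldl g acc [1..<i]" for acc
    using oth i unfolding g_def g'_def by (intro foldl_cong) auto
  have B: "foldl g' acc [i+2..<m+n+1] = foldl g acc [i+2..<m+n+1]" for acc
    using oth i unfolding g_def g'_def by (intro foldl_cong) auto
  have M: "foldl g' acc [i, i+1] = foldl g acc [i, i+1]" for acc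
    using mid unfolding g_def g'_def by (simp add: dop_assoc)
  show ?thesis
    unfolding Rop_def g_def[symmetric] g'_def[symmetric] L foldl_append A M B ..
qed

lemma valid_nz: "valid_tuple m n y \<Longrightarrow> y j \<noteq> 0"
  unfolding valid_tuple_def by (cases "j = 0 \<or> m + n \<le> j") auto

lemma Rcoef_conv: "Rcoef h m n p z lam s y i =
   to_fract (Tpol h m n p z lam s i) * to_fract (pshift h (- s i) (y (i-1))) * to_fract (pshift h (s i) (y i)) /
   (to_fract (pshift h (s i) (Tpol h m n p z lam s i)) * to_fract (y (i-1)) * to_fract (y i))"
  unfolding Rcoef_def Fract_conv_to_fract by simp

lemma to_fract_smult: "to_fract (smult c p) = to_fract [:c:] * to_fract p"
proof -
  have "smult c p = [:c:] * p" by simp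
  then show ?thesis by (metis to_fract_mult)
qed

lemma prod_cancel_a:
  fixes t am yp tp a0 y s1 c2 s2 c1 up u :: "'a::field"
  assumes "y \<noteq> 0" "yp \<noteq> 0" "u \<noteq> 0" "up \<noteq> 0"
  shows "t*am*yp/(tp*a0*y) * (s1*y*c2/(s2*yp*c1)) = t*am*up/(tp*a0*u) * (s1*u*c2/(s2*up*c1))"
proof -
  have "t*am*yp/(tp*a0*y) * (s1*y*c2/(s2*yp*c1)) = (t*am*s1*c2)/(tp*a0*s2*c1) * ((yp*y)/(y*yp))"
    by (simp add: mult_ac)
  also have "\<dots> = (t*am*s1*c2)/(tp*a0*s2*c1)" using assms by simp
  also have "\<dots> = (t*am*s1*c2)/(tp*a0*s2*c1) * ((up*u)/(u*up))" using assms by simp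
  also have "\<dots> = t*am*up/(tp*a0*u) * (s1*u*c2/(s2*up*c1))" by (simp add: mult_ac)
  finally show ?thesis .
qed

lemma prod_cancel_b:
  fixes t am yp tp a0 y s1 c2 s2 c1 up u :: "'a::field"
  assumes "y \<noteq> 0" "yp \<noteq> 0" "u \<noteq> 0" "up \<noteq> 0"
  shows "s*yp*cm/(sm*y*c0) * (t1*a2*y/(t*a1*yp)) = s*up*cm/(sm*u*c0) * (t1*a2*u/(t*a1*up))"
proof -
  have "s*yp*cm/(sm*y*c0) * (t1*a2*y/(t*a1*yp)) = (s*cm*t1*a2)/(sm*c0*t*a1) * ((yp*y)/(y*yp))"
    by (simp add: mult_ac)
  also have "\<dots> = (s*cm*t1*a2)/(sm*c0*t*a1)" using assms by simp
  also have "\<dots> = (s*cm*t1*a2)/(sm*c0*t*a1) * ((up*u)/(u*up))" using assms by simp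
  also have "\<dots> = s*up*cm/(sm*u*c0) * (t1*a2*u/(t*a1*up))" by (simp add: mult_ac)
  finally show ?thesis .
qed

lemma bos_step:
  assumes val: "valid_tuple m n y" and i: "1 \<le> i" "i < m + n"
    and e: "s (i+1) = s i" and ev: "s i = 1 \<or> s i = -1" and yt: "yt \<noteq> 0"
    and W: "Wr h (s i) (y i) yt * Tpol h m n p z lam s (i+1) =
              smult c (Tpol h m n p z lam s i * pshift h (- s i) (y (i-1)) * y (i+1))"
  shows "Rop h m n p z lam s (y(i := yt)) = Rop h m n p z lam s y"
proof (rule Rop_local[OF i])
  let ?y' = "y(i := yt)"
  show "s j = s j \<and> Rcoef h m n p z lam s ?y' j = Rcoef h m n p z lam s y j"
    if "1 \<le> j" "j \<le> m + n" "j \<noteq> i" "j \<noteq> i + 1" for j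
  proof -
    have "j - 1 \<noteq> i" using that by auto
    then show ?thesis using that by (simp add: Rcoef_def)
  qed
  define ee where "ee = s i"
  define Ti where "Ti = Tpol h m n p z lam s i"
  define Ti1 where "Ti1 = Tpol h m n p z lam s (i+1)"
  define A where "A = y (i-1)"
  define Y where "Y = y i"
  define C where "C = y (i+1)"
  define U where "U = yt"
  note defs = ee_def[symmetric] Ti_def[symmetric] Ti1_def[symmetric] A_def[symmetric] Y_def[symmetric]
    C_def[symmetric] U_def[symmetric]
  have nz: "A \<noteq> 0" "Y \<noteq> 0" "C \<noteq> 0" "U \<noteq> 0" "Ti \<noteq> 0" "Ti1 \<noteq> 0"
    using valid_nz[OF val] yt unfolding A_def Y_def C_def U_def Ti_def Ti1_def by auto
  have yi: "?y' (i - 1) = A" "?y' i = U" "?y' (i+1) = C" "y (i+1-1) = Y" "?y' (i+1-1) = U"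
    using i unfolding A_def U_def C_def Y_def by auto
  let ?P = "to_fract :: complex poly \<Rightarrow> complex poly fract"
  have im: "i - 1 \<noteq> i" "i - Suc 0 \<noteq> i" using i by auto
  define a where "a = Rcoef h m n p z lam s y i"
  define b where "b = Rcoef h m n p z lam s y (i+1)"
  define a' where "a' = Rcoef h m n p z lam s ?y' i"
  define b' where "b' = Rcoef h m n p z lam s ?y' (i+1)"
  have ea: "a = ?P Ti * ?P (pshift h (- ee) A) * ?P (pshift h ee Y) / (?P (pshift h ee Ti) * ?P A * ?P Y)"
    unfolding a_def Rcoef_conv Ti_def Ti1_def A_def Y_def C_def U_def ee_def using i e im by simp
  have eb: "b = ?P Ti1 * ?P (pshift h (- ee) Y) * ?P (pshift h ee C) / (?P (pshift h ee Ti1) * ?P Y * ?P C)"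
    unfolding b_def Rcoef_conv Ti_def Ti1_def A_def Y_def C_def U_def ee_def using i e im by simp
  have ea': "a' = ?P Ti * ?P (pshift h (- ee) A) * ?P (pshift h ee U) / (?P (pshift h ee Ti) * ?P A * ?P U)"
    unfolding a'_def Rcoef_conv Ti_def Ti1_def A_def Y_def C_def U_def ee_def using i e im by simp
  have eb': "b' = ?P Ti1 * ?P (pshift h (- ee) U) * ?P (pshift h ee C) / (?P (pshift h ee Ti1) * ?P U * ?P C)"
    unfolding b'_def Rcoef_conv Ti_def Ti1_def A_def Y_def C_def U_def ee_def using i e im by simp
  have W0: "(Y * pshift h (- ee) U - U * pshift h (- ee) Y) * Ti1 = smult c (Ti * pshift h (- ee) A * C)"
    using W unfolding Wr_def defs .
  have W1: "(?P Y * ?P (pshift h (- ee) U) - ?P U * ?P (pshift h (- ee) Y)) * ?P Ti1 =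
      ?P [:c:] * ?P Ti * ?P (pshift h (- ee) A) * ?P C"
  proof -
    have "?P ((Y * pshift h (- ee) U - U * pshift h (- ee) Y) * Ti1) = ?P (smult c (Ti * pshift h (- ee) A * C))"
      using W0 by simp
    then show ?thesis by (simp add: to_fract_smult mult_ac)
  qed
  have W2: "(?P (pshift h ee Y) * ?P U - ?P (pshift h ee U) * ?P Y) * ?P (pshift h ee Ti1) =
      ?P [:c:] * ?P (pshift h ee Ti) * ?P A * ?P (pshift h ee C)"
  proof -
    have "pshift h ee ((Y * pshift h (- ee) U - U * pshift h (- ee) Y) * Ti1) = pshift h ee (smult c (Ti * pshift h (- ee) A * C))"
      using W0 by simp
    then have "(pshift h ee Y * U - pshift h ee U * Y) * pshift h ee Ti1 = smult c (pshift h ee Ti * A * pshift h ee C)"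
      by (simp add: pshift_mult pshift_diff pshift_smult pshift_pshift)
    then have "?P ((pshift h ee Y * U - pshift h ee U * Y) * pshift h ee Ti1) = ?P (smult c (pshift h ee Ti * A * pshift h ee C))"
      by simp
    then show ?thesis by (simp add: to_fract_smult mult_ac)
  qed
  have sum: "a + b = a' + b'"
    unfolding ea eb ea' eb'
    by (rule sum_bos[OF _ _ _ _ _ _ _ W1 W2]) (use nz in simp_all)
  show "dop_mult h (dop_factor h (s i) (Rcoef h m n p z lam s ?y' i))
                   (dop_factor h (s (i+1)) (Rcoef h m n p z lam s ?y' (i+1)))
      = dop_mult h (dop_factor h (s i) (Rcoef h m n p z lam s y i))
                   (dop_factor h (s (i+1)) (Rcoef h m n p z lam s y (i+1)))"
    unfolding a_def[symmetric] b_def[symmetric] a'_def[symmetric] b'_def[symmetric] e ee_def[symmetric]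
  proof (cases "ee = 1")
    case True
    have fb: "fshift h 1 b = ?P (pshift h 1 Ti1) * ?P Y * ?P (pshift h 2 C) / (?P (pshift h 2 Ti1) * ?P (pshift h 1 Y) * ?P (pshift h 1 C))"
      unfolding eb True by (simp add: pshift_pshift)
    have fb': "fshift h 1 b' = ?P (pshift h 1 Ti1) * ?P U * ?P (pshift h 2 C) / (?P (pshift h 2 Ti1) * ?P (pshift h 1 U) * ?P (pshift h 1 C))"
      unfolding eb' True by (simp add: pshift_pshift)
    have "a * fshift h 1 b = a' * fshift h 1 b'"
      unfolding fb fb' unfolding ea ea' True
      by (rule prod_cancel_a) (use nz in simp_all)
    then show "dop_mult h (dop_factor h ee a') (dop_factor h ee b') = dop_mult h (dop_factor h ee a) (dop_factor h ee b)"
    proof -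
      have "dop_mult h (dop_lin a') (dop_lin b') = dop_mult h (dop_lin a) (dop_lin b)"
        by (rule dop_lin_lin_eq) (use sum \<open>a * fshift h 1 b = a' * fshift h 1 b'\<close> in auto)
      then show ?thesis using True by (simp add: dop_factor_def)
    qed
  next
    case False
    then have em: "ee = -1" using ev unfolding ee_def by simp
    have fa: "fshift h 1 a = ?P (pshift h 1 Ti) * ?P (pshift h 2 A) * ?P Y / (?P Ti * ?P (pshift h 1 A) * ?P (pshift h 1 Y))"
      unfolding ea em by (simp add: pshift_pshift)
    have fa': "fshift h 1 a' = ?P (pshift h 1 Ti) * ?P (pshift h 2 A) * ?P U / (?P Ti * ?P (pshift h 1 A) * ?P (pshift h 1 U))"
      unfolding ea' em by (simp add: pshift_pshift)
    have "b * fshift h 1 a = b' * fshift h 1 a'"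
      unfolding fa fa' unfolding eb eb' em minus_minus
      by (rule prod_cancel_b) (use nz in simp_all)
    moreover have "b + a = b' + a'" using sum by (simp add: algebra_simps)
    ultimately have "dop_mult h (dop_lin b) (dop_lin a) = dop_mult h (dop_lin b') (dop_lin a')"
      using dop_lin_lin_eq by blast
    then have "dop_mult h (dop_lin_inv h a) (dop_lin_inv h b) = dop_mult h (dop_lin_inv h a') (dop_lin_inv h b')"
      by (rule bos_inv)
    then show "dop_mult h (dop_factor h ee a') (dop_factor h ee b') = dop_mult h (dop_factor h ee a) (dop_factor h ee b)"
      using em by (simp add: dop_factor_def)
  qed
qed

lemma prod_ferm1:
  fixes ui ap um uim a0 u tip ypp tipp yp ui1 cp ui1p c0 ti1p ti1 z zp psip phip :: "'a::field"
  assumes nz: "uim\<noteq>0" "a0\<noteq>0" "u\<noteq>0" "tipp\<noteq>0" "ap\<noteq>0" "yp\<noteq>0" "ui1p\<noteq>0" "c0\<noteq>0" "ti1\<noteq>0" "cp\<noteq>0" "z\<noteq>0" "zp\<noteq>0"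
    and R3: "ui*z = uim*psip" and R1s: "tip*zp = tipp*phip" and R4: "ui1*z = ui1p*phip" and R2s: "ti1p*zp = ti1*psip"
  shows "(ui*ap*um/(uim*a0*u)) * (tip*a0*ypp/(tipp*ap*yp)) = (ui1*um*cp/(ui1p*u*c0)) * (ti1p*ypp*c0/(ti1*yp*cp))"
proof -
  have e1: "ui/uim = psip/z" "tip/tipp = phip/zp" "ui1/ui1p = phip/z" "ti1p/ti1 = psip/zp"
    using nz R3 R1s R4 R2s by (simp_all add: field_simps)
  have "(ui*ap*um/(uim*a0*u)) * (tip*a0*ypp/(tipp*ap*yp)) = (ui/uim) * (tip/tipp) * (um*ypp/(u*yp)) * ((ap*a0)/(a0*ap))"
    by (simp add: mult_ac)
  also have "\<dots> = (psip/z) * (phip/zp) * (um*ypp/(u*yp))" using nz e1 by simp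
  also have "\<dots> = (ui1/ui1p) * (ti1p/ti1) * (um*ypp/(u*yp)) * ((cp*c0)/(c0*cp))" using nz e1 by (simp add: mult_ac)
  also have "\<dots> = (ui1*um*cp/(ui1p*u*c0)) * (ti1p*ypp*c0/(ti1*yp*cp))" by (simp add: mult_ac)
  finally show ?thesis .
qed

lemma prod_ferm2:
  fixes ti1 yp cm ti1m y c0 ui1s u2 ui1 u1 ti am tip a0 uis uiss z zs psi phi :: "'a::field"
  assumes nz: "ti1m\<noteq>0" "y\<noteq>0" "c0\<noteq>0" "ui1\<noteq>0" "u1\<noteq>0" "cm\<noteq>0" "tip\<noteq>0" "a0\<noteq>0" "uiss\<noteq>0" "am\<noteq>0" "z\<noteq>0" "zs\<noteq>0"
    and R2: "ti1*z = ti1m*psi" and R4s: "ui1s*zs = ui1*phi" and R1: "ti*z = tip*phi" and R3s: "uis*zs = uiss*psi"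
  shows "(ti1*yp*cm/(ti1m*y*c0)) * (ui1s*u2*c0/(ui1*u1*cm)) = (ti*am*yp/(tip*a0*y)) * (uis*a0*u2/(uiss*am*u1))"
proof -
  have e1: "ti1/ti1m = psi/z" "ui1s/ui1 = phi/zs" "ti/tip = phi/z" "uis/uiss = psi/zs"
    using nz R2 R4s R1 R3s by (simp_all add: field_simps)
  have "(ti1*yp*cm/(ti1m*y*c0)) * (ui1s*u2*c0/(ui1*u1*cm)) = (ti1/ti1m) * (ui1s/ui1) * (yp*u2/(y*u1)) * ((cm*c0)/(c0*cm))"
    by (simp add: mult_ac)
  also have "\<dots> = (psi/z) * (phi/zs) * (yp*u2/(y*u1))" using nz e1 by simp
  also have "\<dots> = (ti/tip) * (uis/uiss) * (yp*u2/(y*u1)) * ((am*a0)/(a0*am))" using nz e1 by (simp add: mult_ac)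
  also have "\<dots> = (ti*am*yp/(tip*a0*y)) * (uis*a0*u2/(uiss*am*u1))" by (simp add: mult_ac)
  finally show ?thesis .
qed

lemma lamS_swap_other:
  assumes pw: "polyweight m n mu" and s: "s \<in> parseqs m n" and i: "1 \<le> i" "i < m + n" "s i \<noteq> s (i+1)"
    and j: "j \<noteq> i" "j \<noteq> i + 1"
  shows "lamS m n mu (swap_at i s) j = lamS m n mu s j"
  using lamS_swap[OF pw s i] j by (simp add: oddrefl_def)

lemma ferm_step:
  assumes pw: "\<forall>k<p. polyweight m n (lam k)" and s: "s \<in> parseqs m n"
    and val: "valid_tuple m n y" and i: "1 \<le> i" "i < m + n"
    and ne: "s i \<noteq> s (i+1)" and yt: "yt \<noteq> 0"
    and R: "y i * pshift h (- s i) yt =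
              smult c (phipol h m n p z lam s i * pshift h (- s i) (y (i-1)) * y (i+1)
                 - psipol h m n p z lam s i * y (i-1) * pshift h (- s i) (y (i+1)))"
  shows "Rop h m n p z lam (swap_at i s) (y(i := yt)) = Rop h m n p z lam s y"
proof (rule Rop_local[OF i])
  let ?y' = "y(i := yt)"
  let ?s' = "swap_at i s"
  have s': "?s' \<in> parseqs m n" by (rule swap_parseqs[OF s i])
  have lsw: "lamS m n (lam k) ?s' = oddrefl i (lamS m n (lam k) s)" if "k < p" for k
    using lamS_swap[OF pw[rule_format, OF that] s i ne] .
  show "?s' j = s j \<and> Rcoef h m n p z lam ?s' ?y' j = Rcoef h m n p z lam s y j"
    if "1 \<le> j" "j \<le> m + n" "j \<noteq> i" "j \<noteq> i + 1" for j
  proof -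
    have "j - 1 \<noteq> i" using that by auto
    moreover have sj: "?s' j = s j" using that by (simp add: swap_at_simps)
    moreover have "Tpol h m n p z lam ?s' j = Tpol h m n p z lam s j"
      unfolding Tpol_def sj
      using lamS_swap_other[OF pw[rule_format] s i ne] that by (intro prod.cong refl) auto
    ultimately show ?thesis using that by (simp add: Rcoef_def)
  qed
  obtain ee where ee: "s i = ee" "s (i+1) = - ee" "ee = 1 \<or> ee = -1"
    using parseqs_vals[OF s, of i] parseqs_vals[OF s, of "i+1"] i ne by force
  have ee': "?s' i = - ee" "?s' (i+1) = ee" using ee by (simp_all add: swap_at_simps)
  define K where "K = {k. k < p \<and> lamS m n (lam k) s i + lamS m n (lam k) s (i+1) \<noteq> 0}"
  have Kp: "K \<subseteq> {..<p}" unfolding K_def by auto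
  have nn: "lamS m n (lam k) s i \<ge> 0" "lamS m n (lam k) s (i+1) \<ge> 0"
    "lamS m n (lam k) ?s' i \<ge> 0" "lamS m n (lam k) ?s' (i+1) \<ge> 0" if "k < p" for k
    using lamS_nonneg[OF pw[rule_format, OF that] s, of i] lamS_nonneg[OF pw[rule_format, OF that] s, of "i+1"]
      lamS_nonneg[OF pw[rule_format, OF that] s', of i] lamS_nonneg[OF pw[rule_format, OF that] s', of "i+1"] i
    by auto
  have inK: "lamS m n (lam k) ?s' i = lamS m n (lam k) s (i+1) + 1"
            "lamS m n (lam k) ?s' (i+1) = lamS m n (lam k) s i - 1" if "k \<in> K" for k
    using that lsw[of k] unfolding K_def by (auto simp: oddrefl_def)
  have notK: "lamS m n (lam k) s i = 0" "lamS m n (lam k) s (i+1) = 0"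
             "lamS m n (lam k) ?s' i = 0" "lamS m n (lam k) ?s' (i+1) = 0" if "k < p" "k \<notin> K" for k
  proof -
    have sum0: "lamS m n (lam k) s i + lamS m n (lam k) s (i+1) = 0" using that unfolding K_def by auto
    then show "lamS m n (lam k) s i = 0" "lamS m n (lam k) s (i+1) = 0" using nn[OF that(1)] by auto
    then show "lamS m n (lam k) ?s' i = 0" "lamS m n (lam k) ?s' (i+1) = 0"
      using lsw[OF that(1)] sum0 by (auto simp: oddrefl_def)
  qed
  define Z where "Z = (\<Prod>k\<in>K. linf (- z k))"
  define phi where "phi = phipol h m n p z lam s i"
  define psi where "psi = psipol h m n p z lam s i"
  define Ti where "Ti = Tpol h m n p z lam s i"
  define Ti1 where "Ti1 = Tpol h m n p z lam s (i+1)"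
  define Ui where "Ui = Tpol h m n p z lam ?s' i"
  define Ui1 where "Ui1 = Tpol h m n p z lam ?s' (i+1)"
  define A where "A = y (i-1)"
  define Y where "Y = y i"
  define C where "C = y (i+1)"
  define U where "U = yt"
  have finK: "finite K" using Kp finite_subset by blast
  have Znz: "Z \<noteq> 0" unfolding Z_def using finK by simp
  have phinz: "phi \<noteq> 0" "psi \<noteq> 0" unfolding phi_def psi_def phipol_def psipol_def by auto
  have nz: "A \<noteq> 0" "Y \<noteq> 0" "C \<noteq> 0" "U \<noteq> 0" "Ti \<noteq> 0" "Ti1 \<noteq> 0" "Ui \<noteq> 0" "Ui1 \<noteq> 0"
    using valid_nz[OF val] yt unfolding A_def Y_def C_def U_def Ti_def Ti1_def Ui_def Ui1_def by auto
  have nnK: "lamS m n (lam k) s i \<ge> 0" "lamS m n (lam k) s (i+1) \<ge> 0"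
    "lamS m n (lam k) ?s' i \<ge> 0" "lamS m n (lam k) ?s' (i+1) \<ge> 0" if "k \<in> K" for k
    using nn[of k] that Kp by auto
  have R1: "Ti * Z = pshift h ee Ti * phi"
    using Tpol_ratio[OF Kp, of m n lam s i h z, OF nnK(1) notK(1)]
    unfolding Ti_def Z_def phi_def phipol_def K_def[symmetric] ee by auto
  have R2: "Ti1 * Z = pshift h (- ee) Ti1 * psi"
    using Tpol_ratio[OF Kp, of m n lam s "i+1" h z, OF nnK(2) notK(2)]
    unfolding Ti1_def Z_def psi_def psipol_def K_def[symmetric] ee by auto
  have R3: "Ui * Z = pshift h (- ee) Ui * pshift h ee psi"
  proof -
    have "Ui * Z = pshift h (- ee) Ui * (\<Prod>k\<in>K. linf (- z k + of_int (?s' i) * of_int (lamS m n (lam k) ?s' i) * h))"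
      using Tpol_ratio[OF Kp, of m n lam ?s' i h z, OF nnK(3) notK(3)]
      unfolding Ui_def Z_def ee' by auto
    also have "(\<Prod>k\<in>K. linf (- z k + of_int (?s' i) * of_int (lamS m n (lam k) ?s' i) * h)) = pshift h ee psi"
      unfolding psi_def psipol_def K_def[symmetric] pshift_prod
      by (intro prod.cong refl) (auto simp: inK inK(2)[simplified] pshift_linf ee ee' ee(2)[simplified] ee'(2)[simplified] algebra_simps)
    finally show ?thesis .
  qed
  have R4: "Ui1 * Z = pshift h ee Ui1 * pshift h ee phi"
  proof -
    have "Ui1 * Z = pshift h ee Ui1 * (\<Prod>k\<in>K. linf (- z k + of_int (?s' (i+1)) * of_int (lamS m n (lam k) ?s' (i+1)) * h))"
      using Tpol_ratio[OF Kp, of m n lam ?s' "i+1" h z, OF nnK(4) notK(4)]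
      unfolding Ui1_def Z_def ee' by auto
    also have "(\<Prod>k\<in>K. linf (- z k + of_int (?s' (i+1)) * of_int (lamS m n (lam k) ?s' (i+1)) * h)) = pshift h ee phi"
      unfolding phi_def phipol_def K_def[symmetric] pshift_prod
      by (intro prod.cong refl) (auto simp: inK inK(2)[simplified] pshift_linf ee ee' ee(2)[simplified] ee'(2)[simplified] algebra_simps)
    finally show ?thesis .
  qed
  have W0: "Y * pshift h (- ee) U = smult c (phi * pshift h (- ee) A * C - psi * A * pshift h (- ee) C)"
    using R unfolding Y_def U_def phi_def psi_def A_def C_def ee .
  let ?P = "to_fract :: complex poly \<Rightarrow> complex poly fract"
  have im: "i - 1 \<noteq> i" "i - Suc 0 \<noteq> i" using i by auto
  note alld = Ti_def Ti1_def Ui_def Ui1_def A_def Y_def C_def U_def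
  define a where "a = Rcoef h m n p z lam s y i"
  define b where "b = Rcoef h m n p z lam s y (i+1)"
  define a' where "a' = Rcoef h m n p z lam ?s' ?y' i"
  define b' where "b' = Rcoef h m n p z lam ?s' ?y' (i+1)"
  have ea: "a = ?P Ti * ?P (pshift h (- ee) A) * ?P (pshift h ee Y) / (?P (pshift h ee Ti) * ?P A * ?P Y)"
    unfolding a_def Rcoef_conv alld using i ee im by simp
  have eb: "b = ?P Ti1 * ?P (pshift h ee Y) * ?P (pshift h (- ee) C) / (?P (pshift h (- ee) Ti1) * ?P Y * ?P C)"
    unfolding b_def Rcoef_conv alld using i ee im by simp
  have ea': "a' = ?P Ui * ?P (pshift h ee A) * ?P (pshift h (- ee) U) / (?P (pshift h (- ee) Ui) * ?P A * ?P U)"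
    unfolding a'_def Rcoef_conv alld using i ee ee' im by simp
  have eb': "b' = ?P Ui1 * ?P (pshift h (- ee) U) * ?P (pshift h ee C) / (?P (pshift h ee Ui1) * ?P U * ?P C)"
    unfolding b'_def Rcoef_conv alld using i ee ee' im by simp
  have W1: "?P Y * ?P (pshift h (- ee) U) = ?P [:c:] * (?P phi * ?P (pshift h (- ee) A) * ?P C - ?P psi * ?P A * ?P (pshift h (- ee) C))"
  proof -
    have "?P (Y * pshift h (- ee) U) = ?P (smult c (phi * pshift h (- ee) A * C - psi * A * pshift h (- ee) C))"
      using W0 by simp
    then show ?thesis by (simp add: to_fract_smult)
  qed
  have W2: "?P (pshift h ee Y) * ?P U = ?P [:c:] * (?P (pshift h ee phi) * ?P A * ?P (pshift h ee C) - ?P (pshift h ee psi) * ?P (pshift h ee A) * ?P C)"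
  proof -
    have "pshift h ee (Y * pshift h (- ee) U) = pshift h ee (smult c (phi * pshift h (- ee) A * C - psi * A * pshift h (- ee) C))"
      using W0 by simp
    then have "pshift h ee Y * U = smult c (pshift h ee phi * A * pshift h ee C - pshift h ee psi * pshift h ee A * C)"
      by (simp add: pshift_mult pshift_diff pshift_smult pshift_pshift)
    then have "?P (pshift h ee Y * U) = ?P (smult c (pshift h ee phi * A * pshift h ee C - pshift h ee psi * pshift h ee A * C))"
      by simp
    then show ?thesis by (simp add: to_fract_smult)
  qed
  have F1: "?P Ti * ?P Z = ?P (pshift h ee Ti) * ?P phi" using arg_cong[OF R1, of ?P] by simp
  have F2: "?P Ti1 * ?P Z = ?P (pshift h (- ee) Ti1) * ?P psi" using arg_cong[OF R2, of ?P] by simp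
  have F3: "?P Ui * ?P Z = ?P (pshift h (- ee) Ui) * ?P (pshift h ee psi)" using arg_cong[OF R3, of ?P] by simp
  have F4: "?P Ui1 * ?P Z = ?P (pshift h ee Ui1) * ?P (pshift h ee phi)" using arg_cong[OF R4, of ?P] by simp
  have shR: "pshift h d (X1 * X2) = pshift h d (X3 * X4) \<Longrightarrow> ?P (pshift h d X1) * ?P (pshift h d X2) = ?P (pshift h d X3) * ?P (pshift h d X4)"
    for d X1 X2 X3 X4 by (simp add: pshift_mult flip: to_fract_mult)
  have sum: "a + a' = b + b'"
    unfolding ea eb ea' eb'
    by (rule sum_ferm[OF _ _ _ _ _ _ _ _ _ F1 F2 F3 F4 W1 W2]) (use nz Znz in simp_all)
  show "dop_mult h (dop_factor h (?s' i) (Rcoef h m n p z lam ?s' ?y' i))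
                   (dop_factor h (?s' (i+1)) (Rcoef h m n p z lam ?s' ?y' (i+1)))
      = dop_mult h (dop_factor h (s i) (Rcoef h m n p z lam s y i))
                   (dop_factor h (s (i+1)) (Rcoef h m n p z lam s y (i+1)))"
    unfolding a_def[symmetric] b_def[symmetric] a'_def[symmetric] b'_def[symmetric] ee ee'
  proof (cases "ee = 1")
    case True
    have F1s: "?P (pshift h 1 Ti) * ?P (pshift h 1 Z) = ?P (pshift h 2 Ti) * ?P (pshift h 1 phi)"
      using shR[of 1 Ti Z "pshift h 1 Ti" phi] R1 True by (simp add: pshift_pshift)
    have F2s: "?P (pshift h 1 Ti1) * ?P (pshift h 1 Z) = ?P Ti1 * ?P (pshift h 1 psi)"
      using shR[of 1 Ti1 Z "pshift h (-1) Ti1" psi] R2 True by (simp add: pshift_pshift)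
    have fa: "fshift h 1 a = ?P (pshift h 1 Ti) * ?P A * ?P (pshift h 2 Y) / (?P (pshift h 2 Ti) * ?P (pshift h 1 A) * ?P (pshift h 1 Y))"
      unfolding ea True by (simp add: pshift_pshift)
    have fb: "fshift h 1 b = ?P (pshift h 1 Ti1) * ?P (pshift h 2 Y) * ?P C / (?P Ti1 * ?P (pshift h 1 Y) * ?P (pshift h 1 C))"
      unfolding eb True by (simp add: pshift_pshift)
    have "a' * fshift h 1 a = b' * fshift h 1 b"
      unfolding fa fb unfolding ea' eb' True
      by (rule prod_ferm1[OF _ _ _ _ _ _ _ _ _ _ _ _ F3[unfolded True] F1s F4[unfolded True] F2s]) (use nz Znz in simp_all)
    moreover have "a' + a = b' + b" using sum by (simp add: algebra_simps)
    ultimately have "dop_mult h (dop_lin a') (dop_lin a) = dop_mult h (dop_lin b') (dop_lin b)"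
      using dop_lin_lin_eq by blast
    then have "dop_mult h (dop_lin a) (dop_lin_inv h b) = dop_mult h (dop_lin_inv h a') (dop_lin b')"
      by (rule ferm1)
    then show "dop_mult h (dop_factor h (- ee) a') (dop_factor h ee b') = dop_mult h (dop_factor h ee a) (dop_factor h (- ee) b)"
      using True by (simp add: dop_factor_def)
  next
    case False
    then have em: "ee = -1" using ee by simp
    have F4s: "?P (pshift h 1 Ui1) * ?P (pshift h 1 Z) = ?P Ui1 * ?P phi"
      using shR[of 1 Ui1 Z "pshift h (-1) Ui1" "pshift h (-1) phi"] R4 em by (simp add: pshift_pshift)
    have F3s: "?P (pshift h 1 Ui) * ?P (pshift h 1 Z) = ?P (pshift h 2 Ui) * ?P psi"
      using shR[of 1 Ui Z "pshift h 1 Ui" "pshift h (-1) psi"] R3 em by (simp add: pshift_pshift)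
    have fa': "fshift h 1 a' = ?P (pshift h 1 Ui) * ?P A * ?P (pshift h 2 U) / (?P (pshift h 2 Ui) * ?P (pshift h 1 A) * ?P (pshift h 1 U))"
      unfolding ea' em by (simp add: pshift_pshift)
    have fb': "fshift h 1 b' = ?P (pshift h 1 Ui1) * ?P (pshift h 2 U) * ?P C / (?P Ui1 * ?P (pshift h 1 U) * ?P (pshift h 1 C))"
      unfolding eb' em by (simp add: pshift_pshift)
    have "b * fshift h 1 b' = a * fshift h 1 a'"
      unfolding fa' fb' unfolding ea eb em minus_minus
      by (rule prod_ferm2[OF _ _ _ _ _ _ _ _ _ _ _ _ F2[unfolded em minus_minus] F4s F1[unfolded em] F3s]) (use nz Znz in simp_all)
    moreover have "b + b' = a + a'" using sum by (simp add: algebra_simps)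
    ultimately have "dop_mult h (dop_lin b) (dop_lin b') = dop_mult h (dop_lin a) (dop_lin a')"
      using dop_lin_lin_eq by blast
    then have "dop_mult h (dop_lin_inv h a) (dop_lin b) = dop_mult h (dop_lin a') (dop_lin_inv h b')"
      by (rule ferm2)
    then show "dop_mult h (dop_factor h (- ee) a') (dop_factor h ee b') = dop_mult h (dop_factor h ee a) (dop_factor h (- ee) b)"
      using em by (simp add: dop_factor_def)
  qed
qed

definition polyconv :: "(nat \<Rightarrow> complex poly) \<Rightarrow> complex poly \<Rightarrow> bool" where
  "polyconv P q \<longleftrightarrow> (\<exists>d. \<forall>k. degree (P k) \<le> d) \<and> (\<forall>j. (\<lambda>k. coeff (P k) j) \<longlonglongrightarrow> coeff q j)"

lemma polyconv_deg:
  assumes "polyconv P q"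
  obtains d where "\<And>k. degree (P k) \<le> d" "degree q \<le> d"
proof -
  obtain d where d: "\<And>k. degree (P k) \<le> d" using assms unfolding polyconv_def by blast
  have "coeff q j = 0" if "j > d" for j
  proof -
    have lim: "(\<lambda>k. coeff (P k) j) \<longlonglongrightarrow> coeff q j" using assms unfolding polyconv_def by blast
    have "(\<lambda>k. coeff (P k) j) = (\<lambda>k. 0)"
    proof
      fix k show "coeff (P k) j = 0" using d[of k] that by (intro coeff_eq_0) simp
    qed
    then have "(\<lambda>k. 0) \<longlonglongrightarrow> coeff q j" using lim by simp
    then show ?thesis using LIMSEQ_unique[OF _ tendsto_const] by blast
  qed
  then have "degree q \<le> d" by (intro degree_le) blast
  then show ?thesis using that d by blast
qed

lemma polyconv_const: "polyconv (\<lambda>k. q) q"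
  unfolding polyconv_def by auto

lemma polyconv_add: "polyconv P q \<Longrightarrow> polyconv Q r \<Longrightarrow> polyconv (\<lambda>k. P k + Q k) (q + r)"
proof -
  assume a: "polyconv P q" "polyconv Q r"
  obtain d1 where d1: "\<And>k. degree (P k) \<le> d1" using a unfolding polyconv_def by blast
  obtain d2 where d2: "\<And>k. degree (Q k) \<le> d2" using a unfolding polyconv_def by blast
  have "degree (P k + Q k) \<le> d1 + d2" for k
    using degree_add_le[of "P k" "d1 + d2" "Q k"] d1[of k] d2[of k] by linarith
  moreover have "(\<lambda>k. coeff (P k + Q k) j) \<longlonglongrightarrow> coeff (q + r) j" for j
    using a unfolding polyconv_def by (auto intro!: tendsto_add)
  ultimately show ?thesis unfolding polyconv_def by blast
qed

lemma polyconv_uminus: "polyconv P q \<Longrightarrow> polyconv (\<lambda>k. - P k) (- q)"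
  unfolding polyconv_def by (auto intro!: tendsto_minus)

lemma polyconv_mult: "polyconv P q \<Longrightarrow> polyconv Q r \<Longrightarrow> polyconv (\<lambda>k. P k * Q k) (q * r)"
proof -
  assume a: "polyconv P q" "polyconv Q r"
  obtain d1 where d1: "\<And>k. degree (P k) \<le> d1" using a unfolding polyconv_def by blast
  obtain d2 where d2: "\<And>k. degree (Q k) \<le> d2" using a unfolding polyconv_def by blast
  have "degree (P k * Q k) \<le> d1 + d2" for k
    using degree_mult_le[of "P k" "Q k"] d1[of k] d2[of k] by linarith
  moreover have "(\<lambda>k. coeff (P k * Q k) j) \<longlonglongrightarrow> coeff (q * r) j" for j
    unfolding coeff_mult using a unfolding polyconv_def by (auto intro!: tendsto_sum tendsto_mult)
  ultimately show ?thesis unfolding polyconv_def by blast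
qed

lemma polyconv_unique: "polyconv P q \<Longrightarrow> polyconv P r \<Longrightarrow> q = r"
  unfolding polyconv_def by (auto intro: poly_eqI LIMSEQ_unique)

lemma pshift_as_sum: "degree p \<le> d \<Longrightarrow> pshift h c p = (\<Sum>i\<le>d. smult (coeff p i) (pshift h c (monom 1 i)))"
proof -
  assume "degree p \<le> d"
  then have "pshift h c p = pshift h c (\<Sum>i\<le>d. smult (coeff p i) (monom 1 i))"
    using poly_as_sum_of_monoms'[of p d] by (simp add: smult_monom)
  then show ?thesis by (simp add: pshift_sum pshift_smult)
qed

lemma polyconv_pshift: "polyconv P q \<Longrightarrow> polyconv (\<lambda>k. pshift h c (P k)) (pshift h c q)"
proof -
  assume a: "polyconv P q"
  obtain d where d: "\<And>k. degree (P k) \<le> d" "degree q \<le> d" using polyconv_deg[OF a] by blast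
  have deg: "degree (pshift h c p) = degree p" for p
    unfolding pshift_def by (simp add: degree_pcompose)
  have "(\<lambda>k. coeff (pshift h c (P k)) j) \<longlonglongrightarrow> coeff (pshift h c q) j" for j
    unfolding pshift_as_sum[OF d(1)] pshift_as_sum[OF d(2)] coeff_sum coeff_smult
    using a unfolding polyconv_def by (auto intro!: tendsto_sum tendsto_mult)
  then show ?thesis unfolding polyconv_def using d deg by metis
qed

lemma polyconv_prod: "finite A \<Longrightarrow> (\<And>i. i \<in> A \<Longrightarrow> polyconv (\<lambda>k. P i k) (q i)) \<Longrightarrow>
   polyconv (\<lambda>k. \<Prod>i\<in>A. P i k) (\<Prod>i\<in>A. q i)"
  by (induction A rule: finite_induct) (auto intro: polyconv_const polyconv_mult)

definition tupconv :: "nat \<Rightarrow> nat \<Rightarrow> (nat \<Rightarrow> nat \<Rightarrow> complex poly) \<Rightarrow> (nat \<Rightarrow> complex poly) \<Rightarrow> bool" where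
  "tupconv m n u v \<longleftrightarrow> (\<forall>k. valid_tuple m n (u k)) \<and> valid_tuple m n v \<and>
     (\<exists>d. \<forall>k i. 1 \<le> i \<and> i < m + n \<longrightarrow> degree (u k i) \<le> d) \<and>
     (\<forall>i j. 1 \<le> i \<and> i < m + n \<longrightarrow> (\<lambda>k. coeff (u k i) j) \<longlonglongrightarrow> coeff (v i) j)"

lemma tupconv_comp: assumes "tupconv m n u v" shows "polyconv (\<lambda>k. u k i) (v i)"
proof (cases "1 \<le> i \<and> i < m + n")
  case True
  then show ?thesis using assms unfolding tupconv_def polyconv_def by blast
next
  case False
  then have io: "i = 0 \<or> m + n \<le> i" by auto
  have "u k i = 1" "v i = 1" for k using assms io unfolding tupconv_def valid_tuple_def by blast+
  then show ?thesis using polyconv_const by simp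
qed

definition pcont :: "nat \<Rightarrow> nat \<Rightarrow> ((nat \<Rightarrow> complex poly) \<Rightarrow> complex poly) \<Rightarrow> bool" where
  "pcont m n N \<longleftrightarrow> (\<forall>u v. tupconv m n u v \<longrightarrow> polyconv (\<lambda>k. N (u k)) (N v))"

lemma pcont_const: "pcont m n (\<lambda>y. q)"
  unfolding pcont_def by (simp add: polyconv_const)
lemma pcont_comp: "pcont m n (\<lambda>y. y i)"
  unfolding pcont_def by (simp add: tupconv_comp)
lemma pcont_add: "pcont m n N \<Longrightarrow> pcont m n M \<Longrightarrow> pcont m n (\<lambda>y. N y + M y)"
  unfolding pcont_def by (simp add: polyconv_add)
lemma pcont_mult: "pcont m n N \<Longrightarrow> pcont m n M \<Longrightarrow> pcont m n (\<lambda>y. N y * M y)"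
  unfolding pcont_def by (simp add: polyconv_mult)
lemma pcont_uminus: "pcont m n N \<Longrightarrow> pcont m n (\<lambda>y. - N y)"
  unfolding pcont_def by (simp add: polyconv_uminus)
lemma pcont_pshift: "pcont m n N \<Longrightarrow> pcont m n (\<lambda>y. pshift h c (N y))"
  unfolding pcont_def by (simp add: polyconv_pshift)

definition rcont :: "nat \<Rightarrow> nat \<Rightarrow> ((nat \<Rightarrow> complex poly) \<Rightarrow> complex poly fract) \<Rightarrow> bool" where
  "rcont m n g \<longleftrightarrow> (\<exists>N D. pcont m n N \<and> pcont m n D \<and>
      (\<forall>y. valid_tuple m n y \<longrightarrow> D y \<noteq> 0 \<and> g y = Fract (N y) (D y)))"

lemma rcont_const: "rcont m n (\<lambda>y. c)"
proof (cases c)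
  case (Fract a b)
  then show ?thesis unfolding rcont_def
    by (intro exI[of _ "\<lambda>y. a"] exI[of _ "\<lambda>y. b"]) (simp add: pcont_const)
qed

lemma rcont_Fract: "pcont m n N \<Longrightarrow> pcont m n D \<Longrightarrow> (\<And>y. valid_tuple m n y \<Longrightarrow> D y \<noteq> 0) \<Longrightarrow>
   rcont m n (\<lambda>y. Fract (N y) (D y))"
  unfolding rcont_def by blast

lemma rcont_add: assumes "rcont m n f" "rcont m n g" shows "rcont m n (\<lambda>y. f y + g y)"
proof -
  obtain N1 D1 where 1: "pcont m n N1" "pcont m n D1" "\<And>y. valid_tuple m n y \<Longrightarrow> D1 y \<noteq> 0 \<and> f y = Fract (N1 y) (D1 y)"
    using assms(1) unfolding rcont_def by blast
  obtain N2 D2 where 2: "pcont m n N2" "pcont m n D2" "\<And>y. valid_tuple m n y \<Longrightarrow> D2 y \<noteq> 0 \<and> g y = Fract (N2 y) (D2 y)"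
    using assms(2) unfolding rcont_def by blast
  show ?thesis unfolding rcont_def
    by (intro exI[of _ "\<lambda>y. N1 y * D2 y + N2 y * D1 y"] exI[of _ "\<lambda>y. D1 y * D2 y"])
       (use 1 2 in \<open>auto intro!: pcont_add pcont_mult\<close>)
qed

lemma rcont_mult: assumes "rcont m n f" "rcont m n g" shows "rcont m n (\<lambda>y. f y * g y)"
proof -
  obtain N1 D1 where 1: "pcont m n N1" "pcont m n D1" "\<And>y. valid_tuple m n y \<Longrightarrow> D1 y \<noteq> 0 \<and> f y = Fract (N1 y) (D1 y)"
    using assms(1) unfolding rcont_def by blast
  obtain N2 D2 where 2: "pcont m n N2" "pcont m n D2" "\<And>y. valid_tuple m n y \<Longrightarrow> D2 y \<noteq> 0 \<and> g y = Fract (N2 y) (D2 y)"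
    using assms(2) unfolding rcont_def by blast
  show ?thesis unfolding rcont_def
    by (intro exI[of _ "\<lambda>y. N1 y * N2 y"] exI[of _ "\<lambda>y. D1 y * D2 y"])
       (use 1 2 in \<open>auto intro!: pcont_mult\<close>)
qed

lemma rcont_uminus: assumes "rcont m n f" shows "rcont m n (\<lambda>y. - f y)"
proof -
  obtain N1 D1 where 1: "pcont m n N1" "pcont m n D1" "\<And>y. valid_tuple m n y \<Longrightarrow> D1 y \<noteq> 0 \<and> f y = Fract (N1 y) (D1 y)"
    using assms(1) unfolding rcont_def by blast
  show ?thesis unfolding rcont_def
    by (intro exI[of _ "\<lambda>y. - N1 y"] exI[of _ "\<lambda>y. D1 y"])
       (use 1 in \<open>auto intro!: pcont_uminus\<close>)
qed

lemma rcont_fshift: assumes "rcont m n f" shows "rcont m n (\<lambda>y. fshift h c (f y))"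
proof -
  obtain N1 D1 where 1: "pcont m n N1" "pcont m n D1" "\<And>y. valid_tuple m n y \<Longrightarrow> D1 y \<noteq> 0 \<and> f y = Fract (N1 y) (D1 y)"
    using assms(1) unfolding rcont_def by blast
  show ?thesis unfolding rcont_def
    by (intro exI[of _ "\<lambda>y. pshift h c (N1 y)"] exI[of _ "\<lambda>y. pshift h c (D1 y)"])
       (use 1 in \<open>auto intro!: pcont_pshift simp: fshift_Fract\<close>)
qed

lemma rcont_sum: "finite A \<Longrightarrow> (\<And>i. i \<in> A \<Longrightarrow> rcont m n (f i)) \<Longrightarrow> rcont m n (\<lambda>y. \<Sum>i\<in>A. f i y)"
  by (induction A rule: finite_induct) (auto intro: rcont_const rcont_add)

lemma rcont_prod: "finite A \<Longrightarrow> (\<And>i. i \<in> A \<Longrightarrow> rcont m n (f i)) \<Longrightarrow> rcont m n (\<lambda>y. \<Prod>i\<in>A. f i y)"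
  by (induction A rule: finite_induct) (auto intro: rcont_const rcont_mult)

lemma rcont_limit:
  assumes g: "rcont m n g" and t: "tupconv m n u v" and eq: "\<And>k. g (u k) = c"
  shows "g v = c"
proof -
  obtain N D where ND: "pcont m n N" "pcont m n D" "\<And>y. valid_tuple m n y \<Longrightarrow> D y \<noteq> 0 \<and> g y = Fract (N y) (D y)"
    using g unfolding rcont_def by blast
  obtain a b where c: "c = Fract a b" "b \<noteq> 0" by (cases c) auto
  have val: "valid_tuple m n (u k)" "valid_tuple m n v" for k using t unfolding tupconv_def by auto
  have e: "N (u k) * b = a * D (u k)" for k
    using eq[of k] ND(3)[OF val(1)[of k]] c by (simp add: eq_fract)
  have c1: "polyconv (\<lambda>k. N (u k) * b) (N v * b)"
    using ND(1) t unfolding pcont_def by (auto intro!: polyconv_mult polyconv_const)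
  have c2: "polyconv (\<lambda>k. N (u k) * b) (a * D v)"
    unfolding e using ND(2) t unfolding pcont_def by (auto intro!: polyconv_mult polyconv_const)
  have "N v * b = a * D v" using polyconv_unique[OF c1 c2] .
  then show ?thesis using ND(3)[OF val(2)] c by (simp add: eq_fract)
qed

definition dcont :: "nat \<Rightarrow> nat \<Rightarrow> ((nat \<Rightarrow> complex poly) \<Rightarrow> dop) \<Rightarrow> bool" where
  "dcont m n G \<longleftrightarrow> (\<forall>k. rcont m n (\<lambda>y. G y k))"

lemma dcont_mult: "dcont m n A \<Longrightarrow> dcont m n B \<Longrightarrow> dcont m n (\<lambda>y. dop_mult h (A y) (B y))"
  unfolding dcont_def dop_mult_def by (auto intro!: rcont_sum rcont_mult rcont_fshift)

lemma dcont_factor: assumes "rcont m n a" shows "dcont m n (\<lambda>y. dop_factor h e (a y))"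
proof (cases "e = 1")
  case True
  have "rcont m n (\<lambda>y. dop_lin (a y) k)" for k
    unfolding dop_lin_def using assms rcont_const[of m n] rcont_uminus[OF assms] by (cases "k = 0"; cases "k = 1") auto
  then show ?thesis using True unfolding dcont_def dop_factor_def by simp
next
  case False
  have "rcont m n (\<lambda>y. dop_lin_inv h (a y) k)" for k
    unfolding dop_lin_inv_def using assms by (auto intro!: rcont_prod rcont_fshift)
  then show ?thesis using False unfolding dcont_def dop_factor_def by simp
qed

lemma rcont_Rcoef: "rcont m n (\<lambda>y. Rcoef h m n p z lam s y i)"
  unfolding Rcoef_def
  by (rule rcont_Fract)
     (auto intro!: pcont_mult pcont_const pcont_comp pcont_pshift simp: valid_nz)

lemma dcont_foldl: "dcont m n acc \<Longrightarrow>
   dcont m n (\<lambda>y. foldl (\<lambda>a i. dop_mult h a (dop_factor h (s i) (Rcoef h m n p z lam s y i))) (acc y) xs)"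
proof (induction xs arbitrary: acc)
  case Nil then show ?case by simp
next
  case (Cons x xs)
  have "dcont m n (\<lambda>y. dop_mult h (acc y) (dop_factor h (s x) (Rcoef h m n p z lam s y x)))"
    by (rule dcont_mult[OF Cons.prems dcont_factor[OF rcont_Rcoef]])
  from Cons.IH[OF this] show ?case by simp
qed

lemma dcont_Rop: "dcont m n (\<lambda>y. Rop h m n p z lam s y)"
  unfolding Rop_def
  by (rule dcont_foldl) (simp add: dcont_def rcont_const)

theorem theorem5p3:
  fixes h :: complex and m n p :: nat and z :: "nat \<Rightarrow> complex"
    and lam :: "nat \<Rightarrow> nat \<Rightarrow> int"
    and y :: "nat \<Rightarrow> complex poly" and s :: "nat \<Rightarrow> int"
  assumes "h \<noteq> 0"
    and "hgeneric h p z"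
    and "\<forall>k<p. polyweight m n (lam k)"
    and "s \<in> parseqs m n"
    and "valid_tuple m n y"
    and "generic h m n p z lam s y"
    and "represents_bae h m n p z lam s y"
  shows "\<forall>a\<in>population h m n p z lam y s. \<forall>b\<in>population h m n p z lam y s.
           Rop h m n p z lam (snd a) (fst a) = Rop h m n p z lam (snd b) (fst b)"
proof -
  note pw = assms(3)
  define R0 where "R0 = Rop h m n p z lam s y"
  define C0 where "C0 = {(v, s'). s' \<in> parseqs m n \<and> valid_tuple m n v \<and> Rop h m n p z lam s' v = R0}"
  have reach: "b \<in> C0" if "(repro_step h m n p z lam)\<^sup>*\<^sup>* (y, s) b" for b
    using that
  proof (induction rule: rtranclp_induct)
    case base then show ?case using assms(4,5) unfolding C0_def R0_def by simp
  next
    case (step b c)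
    obtain y1 s1 where b: "b = (y1, s1)" by (cases b)
    have b1: "s1 \<in> parseqs m n" "valid_tuple m n y1" "Rop h m n p z lam s1 y1 = R0"
      using step.IH unfolding b C0_def by auto
    obtain i yt where i: "1 \<le> i" "i < m + n" and yt: "yt \<noteq> 0" and
      cases: "(s1 i = s1 (i+1) \<and> c = (y1(i := yt), s1) \<and>
           (\<exists>c. c \<noteq> 0 \<and> Wr h (s1 i) (y1 i) yt * Tpol h m n p z lam s1 (i+1) =
              smult c (Tpol h m n p z lam s1 i * pshift h (- s1 i) (y1 (i-1)) * y1 (i+1))))
        \<or>
          (s1 i \<noteq> s1 (i+1) \<and> c = (y1(i := yt), swap_at i s1) \<and>
           (\<exists>c. c \<noteq> 0 \<and> y1 i * pshift h (- s1 i) yt =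
              smult c (phipol h m n p z lam s1 i * pshift h (- s1 i) (y1 (i-1)) * y1 (i+1)
                 - psipol h m n p z lam s1 i * y1 (i-1) * pshift h (- s1 i) (y1 (i+1)))))"
      using step.hyps(2) unfolding b repro_step_def by auto
    have val': "valid_tuple m n (y1(i := yt))"
      using b1(2) i yt unfolding valid_tuple_def by auto
    from cases show ?case
    proof
      assume bos: "s1 i = s1 (i+1) \<and> c = (y1(i := yt), s1) \<and>
           (\<exists>c. c \<noteq> 0 \<and> Wr h (s1 i) (y1 i) yt * Tpol h m n p z lam s1 (i+1) =
              smult c (Tpol h m n p z lam s1 i * pshift h (- s1 i) (y1 (i-1)) * y1 (i+1)))"
      then obtain cc where W: "Wr h (s1 i) (y1 i) yt * Tpol h m n p z lam s1 (i+1) =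
              smult cc (Tpol h m n p z lam s1 i * pshift h (- s1 i) (y1 (i-1)) * y1 (i+1))" by blast
      have "Rop h m n p z lam s1 (y1(i := yt)) = Rop h m n p z lam s1 y1"
        by (rule bos_step[OF b1(2) i _ _ yt W]) (use bos parseqs_vals[OF b1(1), of i] i in auto)
      then show ?thesis using bos b1 val' unfolding C0_def by auto
    next
      assume ferm: "s1 i \<noteq> s1 (i+1) \<and> c = (y1(i := yt), swap_at i s1) \<and>
           (\<exists>c. c \<noteq> 0 \<and> y1 i * pshift h (- s1 i) yt =
              smult c (phipol h m n p z lam s1 i * pshift h (- s1 i) (y1 (i-1)) * y1 (i+1)
                 - psipol h m n p z lam s1 i * y1 (i-1) * pshift h (- s1 i) (y1 (i+1))))"
      then obtain cc where R: "y1 i * pshift h (- s1 i) yt =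
              smult cc (phipol h m n p z lam s1 i * pshift h (- s1 i) (y1 (i-1)) * y1 (i+1)
                 - psipol h m n p z lam s1 i * y1 (i-1) * pshift h (- s1 i) (y1 (i+1)))" by blast
      have "Rop h m n p z lam (swap_at i s1) (y1(i := yt)) = Rop h m n p z lam s1 y1"
        by (rule ferm_step[OF pw b1(1) b1(2) i _ yt R]) (use ferm in auto)
      then show ?thesis using ferm b1 val' swap_parseqs[OF b1(1) i] unfolding C0_def by auto
    qed
  qed
  have closed: "pop_closed m n C0"
    unfolding pop_closed_def
  proof (intro allI impI)
    fix d s' u v
    assume a: "(\<forall>k. (u k, s') \<in> C0) \<and> (\<forall>k i. 1 \<le> i \<and> i < m + n \<longrightarrow> degree (u k i) \<le> d) \<and>
        valid_tuple m n v \<and>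
        (\<forall>i j. 1 \<le> i \<and> i < m + n \<longrightarrow> (\<lambda>k. coeff (u k i) j) \<longlonglongrightarrow> coeff (v i) j)"
    have u: "s' \<in> parseqs m n" "valid_tuple m n (u k)" "Rop h m n p z lam s' (u k) = R0" for k
      using a unfolding C0_def by auto
    have t: "tupconv m n u v" unfolding tupconv_def using a u(2) by blast
    have "Rop h m n p z lam s' v j = R0 j" for j
      using rcont_limit[OF _ t, of "\<lambda>y. Rop h m n p z lam s' y j" "R0 j"] dcont_Rop[of m n h p z lam s'] u(3)
      unfolding dcont_def by auto
    then show "(v, s') \<in> C0" using u(1) a unfolding C0_def by auto
  qed
  have popC: "population h m n p z lam y s \<subseteq> C0"
    unfolding population_def using reach closed by blast
  have "Rop h m n p z lam (snd a) (fst a) = R0" if "a \<in> population h m n p z lam y s" for a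
    using popC that unfolding C0_def by (cases a) auto
  then show ?thesis by simp
qed

end
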